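(* Let $n\ge1$, $s\in(0,1)$ with $n/s\ge2$, $\Omega\subset\mathbb R^n$ a bounded Lipschitz domain, $\mu\in(0,n)$, $M$ satisfying (M1)–(M3) and $g$ satisfying (g1)–(g4). Then every Palais–Smale sequence of the functional $$J(u)=\frac sn\hat M(\|u\|^{n/s})-\frac12\int_\Omega\left(\int_\Omega\frac{G(y,u)}{|x-y|^\mu}dy\right)G(x,u)\,dx$$ is bounded in $X_0$; i.e. if $\{u_k\}\subset X_0$, $J(u_k)\to c$ for some $c\in\mathbb R$ and $J'(u_k)\to0$ in $X_0^*$, then $\sup_k\|u_k\|<\infty$.
   Context: $X_0=\{u\in W^{s,n/s}(\mathbb R^n): u=0 \text{ in } \mathbb R^n\setminus\Omega\}$ with norm $\|u\|=\left(\int_{\mathbb R^n}\int_{\mathbb R^n}\frac{|u(x)-u(y)|^{n/s}}{|x-y|^{2n}}dxdy\right)^{s/n}$. $M:\mathbb R^+\to\mathbb R^+$ continuous, $\hat M(t)=\int_0^tM$; $g(x,t)=h(x,t)\exp(|t|^{\frac n{n-s}})$ continuous, $G(x,t)=\int_0^tg(x,\tau)d\tau$. (M1) $\hat M(t+s)\ge\hat M(t)+\hat M(s)$ for $t,s\ge0$. (M2) There is $\gamma>1$ with $t\mapsto M(t)/t^{\gamma-1}$ nonincreasing for $t>0$. (M3) For each $b>0$ there is $\kappa(b)>0$ with $M(t)\ge\kappa$ for $t\ge b$. (g1) $h\in C^1(\overline\Omega\times\mathbb R)$, $h=0$ for $t\le0$, $h>0$ for $t>0$. (g2) For every $\varepsilon>0$,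 $\lim_{t\to\infty}\sup_{x}h(x,t)e^{-\varepsilon|t|^{\frac n{n-s}}}=0$ and $\lim_{t\to\infty}\inf_xh(x,t)e^{\varepsilon|t|^{\frac n{n-s}}}=\infty$. (g3) There are positive constants $t_0,T_0,\gamma_0$ with $0<t^{\gamma_0}G(x,t)\le T_0g(x,t)$ for $(x,t)\in\Omega\times[t_0,\infty)$. (g4) There is $l>\frac{\gamma n}{2s}-1$ such that $t\mapsto g(x,t)/t^l$ is increasing on $(0,\infty)$ uniformly in $x$. *)

theory Defs
  imports "HOL-Analysis.Analysis"
begin

definition lipschitz_domain :: "('a::euclidean_space) set \<Rightarrow> bool" where
  "lipschitz_domain \<Omega> \<longleftrightarrow> open \<Omega> \<and> connected \<Omega> \<and> \<Omega> \<noteq> {} \<and>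
     (\<forall>p\<in>frontier \<Omega>. \<exists>r>0. \<exists>e::'a. norm e = 1 \<and>
        (\<exists>(\<phi>::'a \<Rightarrow> real) (Lc::real).
           (\<forall>y z. y \<bullet> e = 0 \<longrightarrow> z \<bullet> e = 0 \<longrightarrow> \<bar>\<phi> y - \<phi> z\<bar> \<le> Lc * norm (y - z)) \<and>
           \<Omega> \<inter> ball p r = {x \<in> ball p r. x \<bullet> e < \<phi> (x - (x \<bullet> e) *\<^sub>R e)}))"

definition gagliardo :: "real \<Rightarrow> real \<Rightarrow> ('a::euclidean_space \<Rightarrow> real) \<Rightarrow> ennreal" where
  "gagliardo p s u =
     (\<integral>\<^sup>+x. \<integral>\<^sup>+y. ennreal (\<bar>u x - u y\<bar> powr p / norm (x - y) powr (real DIM('a) + s * p))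
        \<partial>lebesgue \<partial>lebesgue)"

definition frac_sobolev :: "real \<Rightarrow> real \<Rightarrow> ('a::euclidean_space \<Rightarrow> real) set" where
  "frac_sobolev s p = {u. u \<in> borel_measurable lebesgue \<and>
      (\<integral>\<^sup>+x. ennreal (\<bar>u x\<bar> powr p) \<partial>lebesgue) < \<infinity> \<and> gagliardo p s u < \<infinity>}"

definition X0 :: "real \<Rightarrow> 'a::euclidean_space set \<Rightarrow> ('a \<Rightarrow> real) set" where
  "X0 s \<Omega> = {u \<in> frac_sobolev s (real DIM('a) / s). \<forall>x. x \<notin> \<Omega> \<longrightarrow> u x = 0}"

definition X0_norm :: "real \<Rightarrow> ('a::euclidean_space \<Rightarrow> real) \<Rightarrow> real" where
  "X0_norm s u = enn2real (gagliardo (real DIM('a) / s) s u) powr (s / real DIM('a))"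

definition Mhat :: "(real \<Rightarrow> real) \<Rightarrow> real \<Rightarrow> real" where
  "Mhat M t = integral {0..t} M"

definition has_X0_derivative ::
  "real \<Rightarrow> 'a::euclidean_space set \<Rightarrow> (('a \<Rightarrow> real) \<Rightarrow> real) \<Rightarrow> (('a \<Rightarrow> real) \<Rightarrow> real)
     \<Rightarrow> ('a \<Rightarrow> real) \<Rightarrow> bool" where
  "has_X0_derivative s \<Omega> J L u \<longleftrightarrow>
     (\<forall>v\<in>X0 s \<Omega>. \<forall>w\<in>X0 s \<Omega>. \<forall>a b. L (\<lambda>x. a * v x + b * w x) = a * L v + b * L w) \<and>
     (\<exists>C. \<forall>v\<in>X0 s \<Omega>. \<bar>L v\<bar> \<le> C * X0_norm s v) \<and>
     (\<forall>\<epsilon>>0. \<exists>\<delta>>0. \<forall>v\<in>X0 s \<Omega>. X0_norm s v < \<delta> \<longrightarrow>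
        \<bar>J (\<lambda>x. u x + v x) - J u - L v\<bar> \<le> \<epsilon> * X0_norm s v)"

definition X0_dual_norm :: "real \<Rightarrow> 'a::euclidean_space set \<Rightarrow> (('a \<Rightarrow> real) \<Rightarrow> real) \<Rightarrow> real" where
  "X0_dual_norm s \<Omega> L = (SUP v\<in>{v \<in> X0 s \<Omega>. X0_norm s v \<le> 1}. \<bar>L v\<bar>)"

definition J_fun :: "real \<Rightarrow> real \<Rightarrow> (real \<Rightarrow> real) \<Rightarrow> ('a::euclidean_space \<Rightarrow> real \<Rightarrow> real)
     \<Rightarrow> 'a set \<Rightarrow> ('a \<Rightarrow> real) \<Rightarrow> real" where
  "J_fun s \<mu> M G \<Omega> u =
     s / real DIM('a) * Mhat M (X0_norm s u powr (real DIM('a) / s))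
     - 1/2 * (LINT x:\<Omega>|lebesgue. (LINT y:\<Omega>|lebesgue. G y (u y) / norm (x - y) powr \<mu>) * G x (u x))"

end

theory Submission
  imports Defs
begin

lemma sf_leb: "sigma_finite_measure (lebesgue :: 'a::euclidean_space measure)"
proof -
  interpret lborel: sigma_finite_measure "lborel :: 'a measure" by (rule sigma_finite_lborel)
  from lborel.sigma_finite_countable obtain A :: "'a set set" where
    A: "countable A" "A \<subseteq> sets lborel" "\<Union>A = space lborel" "\<forall>a\<in>A. emeasure lborel a \<noteq> \<infinity>" by blast
  show ?thesis
    apply unfold_locales
    apply (rule exI[of _ A])
    using A by auto
qed

lemma id_leb_borel[measurable]: "(\<lambda>x. x) \<in> (lebesgue :: 'a::euclidean_space measure) \<rightarrow>\<^sub>M borel"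
  by (rule measurable_completion) simp

lemma fst_leb[measurable]: "fst \<in> (lebesgue \<Otimes>\<^sub>M lebesgue) \<rightarrow>\<^sub>M (borel :: 'a::euclidean_space measure)"
  using measurable_compose[OF measurable_fst id_leb_borel] by simp
lemma snd_leb[measurable]: "snd \<in> (lebesgue \<Otimes>\<^sub>M lebesgue) \<rightarrow>\<^sub>M (borel :: 'a::euclidean_space measure)"
  using measurable_compose[OF measurable_snd id_leb_borel] by simp

locale ps_setting =
  fixes \<Omega> :: "'a::euclidean_space set" and s \<mu> \<gamma> l :: real
    and M :: "real \<Rightarrow> real" and g G :: "'a \<Rightarrow> real \<Rightarrow> real"
  assumes s_pos: "0 < s" and p_ge2: "real DIM('a) / s \<ge> 2"
    and \<Omega>_bdd: "bounded \<Omega>" and \<Omega>_open: "open \<Omega>"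
    and \<mu>_pos: "0 < \<mu>" and \<mu>_lt: "\<mu> < real DIM('a)"
    and M_cont: "continuous_on {0..} M"
    and M_nonneg: "\<forall>t\<ge>0. M t \<ge> 0"
    and \<gamma>_gt: "\<gamma> > 1"
    and M2: "\<forall>t1 t2. 0 < t1 \<longrightarrow> t1 \<le> t2 \<longrightarrow> M t2 / t2 powr (\<gamma> - 1) \<le> M t1 / t1 powr (\<gamma> - 1)"
    and M3: "\<forall>b>0. \<exists>\<kappa>>0. \<forall>t\<ge>b. M t \<ge> \<kappa>"
    and g_cont: "continuous_on (closure \<Omega> \<times> UNIV) (\<lambda>z. g (fst z) (snd z))"
    and g_nonneg: "\<forall>x\<in>closure \<Omega>. \<forall>t. g x t \<ge> 0"
    and g_zero: "\<forall>x\<in>closure \<Omega>. \<forall>t\<le>0. g x t = 0"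
    and g_scale: "\<forall>x\<in>\<Omega>. \<forall>\<sigma>>0. \<forall>a. 0 < a \<longrightarrow> a \<le> 1 \<longrightarrow> g x (a * \<sigma>) \<le> a powr l * g x \<sigma>"
    and G_def: "\<forall>x t. G x t = integral {0..t} (g x)"
    and l_big: "l > \<gamma> * real DIM('a) / (2 * s) - 1"
begin

lemma g_cont1: "x \<in> closure \<Omega> \<Longrightarrow> continuous_on S (g x)"
  by (rule continuous_on_compose2[OF g_cont, where f="\<lambda>t. (x, t)", simplified])
     (auto intro!: continuous_intros)

lemma g_int: "x \<in> closure \<Omega> \<Longrightarrow> g x integrable_on {a..b}"
  by (intro integrable_continuous_interval g_cont1)

lemma G_0: "G x 0 = 0"
  using G_def by simp

lemma G_neg: "t \<le> 0 \<Longrightarrow> G x t = 0"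
  using G_def by (cases "t = 0") auto

lemma G_rep: assumes x: "x \<in> closure \<Omega>" shows "G x t = integral {0..1} (\<lambda>r. t * g x (t * r))"
proof (cases "t > 0")
  case True
  have "(g x has_integral G x t) {0..t}"
    using G_def g_int[OF x] by (simp add: has_integral_integral)
  from has_integral_stretch_real[OF this, of t] True
  have "((\<lambda>r. g x (t * r)) has_integral (1 / t) *\<^sub>R G x t) ((\<lambda>r. r / t) ` {0..t})" by simp
  moreover have "(\<lambda>r. r / t) ` {0..t} = {0..1}"
  proof -
    have "(\<lambda>r. r / t) ` {0..t} = (\<lambda>r. (1/t) * r + 0) ` {0..t}" by (simp add: field_simps)
    also have "\<dots> = {0..1}" using True by (subst image_affinity_atLeastAtMost) auto
    finally show ?thesis .
  qed
  ultimately have "((\<lambda>r. g x (t * r)) has_integral (1 / t) * G x t) {0..1}" by simp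
  from has_integral_mult_right[OF this, of t] True
  have "((\<lambda>r. t * g x (t * r)) has_integral G x t) {0..1}" by simp
  from integral_unique[OF this] show ?thesis by simp
next
  case False
  have "integral {0..1} (\<lambda>r. t * g x (t * r)) = integral {0..1} (\<lambda>r::real. 0::real)"
    by (rule Henstock_Kurzweil_Integration.integral_cong) (use False x g_zero in \<open>auto simp: mult_nonpos_nonneg\<close>)
  then show ?thesis using False G_neg by simp
qed

lemma G_cont: "continuous_on (closure \<Omega> \<times> UNIV) (\<lambda>z. G (fst z) (snd z))"
proof -
  have "continuous_on ((closure \<Omega> \<times> UNIV) \<times> cbox 0 1) (\<lambda>(z, r). snd z * g (fst z) (snd z * (r::real)))"
  proof -
    have "continuous_on ((closure \<Omega> \<times> UNIV) \<times> cbox 0 1) (\<lambda>q. g (fst (fst (fst q), snd (fst q) * snd q)) (snd (fst (fst q), snd (fst q) * snd q)))"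
      by (rule continuous_on_compose2[OF g_cont]) (auto intro!: continuous_intros)
    then have "continuous_on ((closure \<Omega> \<times> UNIV) \<times> cbox 0 1) (\<lambda>q. g (fst (fst q)) (snd (fst q) * snd q))"
      by simp
    then show ?thesis
      by (auto simp: split_beta intro!: continuous_intros)
  qed
  from integral_continuous_on_param[OF this]
  have "continuous_on (closure \<Omega> \<times> UNIV) (\<lambda>z. integral {0..1} (\<lambda>r. snd z * g (fst z) (snd z * r)))"
    by simp
  then show ?thesis
    by (rule continuous_on_eq) (auto simp: G_rep)
qed

lemma G_nonneg: "x \<in> closure \<Omega> \<Longrightarrow> G x t \<ge> 0"
proof (cases "t \<ge> 0")
  case True
  assume x: "x \<in> closure \<Omega>"
  show ?thesis using G_def g_nonneg x by (auto intro!: integral_nonneg g_int)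
qed (simp add: G_neg)

lemma G_mono: assumes x: "x \<in> closure \<Omega>" and le: "t1 \<le> t2" shows "G x t1 \<le> G x t2"
proof (cases "t1 \<ge> 0")
  case True
  have "integral {0..t1} (g x) + integral {t1..t2} (g x) = integral {0..t2} (g x)"
    using Henstock_Kurzweil_Integration.integral_combine[where a=0 and c=t1 and b=t2 and f="g x"] True le g_int[OF x] by simp
  moreover have "integral {t1..t2} (g x) \<ge> 0"
    using g_nonneg x by (auto intro!: integral_nonneg g_int)
  ultimately show ?thesis using G_def by simp
next
  case False
  then show ?thesis using G_neg[of t1 x] G_nonneg[OF x] by simp
qed

lemma G_scale: assumes x: "x \<in> \<Omega>" and lam: "0 < a" "a \<le> 1"
  shows "G x (a * \<tau>) \<le> a powr (l + 1) * G x \<tau>"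
proof (cases "\<tau> > 0")
  case True
  have xc: "x \<in> closure \<Omega>" using x closure_subset by blast
  have "integral {0..1} (\<lambda>r. (a * \<tau>) * g x ((a * \<tau>) * r)) \<le> integral {0..1} (\<lambda>r. a powr (l+1) * (\<tau> * g x (\<tau> * r)))"
  proof (rule integral_le)
    show "(\<lambda>r. (a * \<tau>) * g x ((a * \<tau>) * r)) integrable_on {0..1}"
      by (intro integrable_continuous_interval continuous_intros continuous_on_compose2[OF g_cont1[OF xc]]) auto
    show "(\<lambda>r. a powr (l+1) * (\<tau> * g x (\<tau> * r))) integrable_on {0..1}"
      by (intro integrable_continuous_interval continuous_intros continuous_on_compose2[OF g_cont1[OF xc]]) auto
    fix r :: real assume r: "r \<in> {0..1}"
    show "(a * \<tau>) * g x ((a * \<tau>) * r) \<le> a powr (l+1) * (\<tau> * g x (\<tau> * r))"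
    proof (cases "r = 0")
      case True then show ?thesis using g_zero xc by simp
    next
      case False
      then have "\<tau> * r > 0" using r \<open>\<tau> > 0\<close> by auto
      then have "g x (a * (\<tau> * r)) \<le> a powr l * g x (\<tau> * r)"
        using g_scale x lam by blast
      then have "(a * \<tau>) * g x (a * (\<tau> * r)) \<le> (a * \<tau>) * (a powr l * g x (\<tau> * r))"
        using lam \<open>\<tau> > 0\<close> by (intro mult_left_mono) auto
      moreover have "a powr (l+1) = a * a powr l" using lam by (simp add: powr_add)
      ultimately show ?thesis by (simp add: algebra_simps)
    qed
  qed
  then show ?thesis using G_rep[OF xc, of "a * \<tau>"] G_rep[OF xc, of \<tau>] by simp
next
  case False
  then have "a * \<tau> \<le> 0" using lam by (simp add: mult_nonneg_nonpos)
  have xc: "x \<in> closure \<Omega>" using x closure_subset by blast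
  show ?thesis using G_neg[OF \<open>a * \<tau> \<le> 0\<close>] G_nonneg[OF xc, of \<tau>] by simp
qed

lemma G_meas[measurable]:
  assumes w[measurable]: "w \<in> borel_measurable lebesgue"
  shows "(\<lambda>y. indicator \<Omega> y * G y (w y)) \<in> borel_measurable lebesgue"
proof -
  have cont: "continuous_on (\<Omega> \<times> UNIV) (\<lambda>z. G (fst z) (snd z))"
    by (rule continuous_on_subset[OF G_cont]) (use closure_subset in auto)
  have "(\<lambda>z. indicator (\<Omega> \<times> UNIV) z *\<^sub>R G (fst z) (snd z)) \<in> borel_measurable borel"
    by (rule borel_measurable_continuous_on_indicator[OF _ cont]) (use \<Omega>_open in \<open>auto intro: borel_open open_Times\<close>)
  then have m: "(\<lambda>z. indicator (\<Omega> \<times> UNIV) z *\<^sub>R G (fst z) (snd z)) \<in> borel_measurable (borel \<Otimes>\<^sub>M borel)"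
    by (simp add: borel_prod)
  have "(\<lambda>y. (y, w y)) \<in> lebesgue \<rightarrow>\<^sub>M (borel \<Otimes>\<^sub>M borel)"
    by measurable
  from measurable_compose[OF this m] show ?thesis
    by (simp add: indicator_def)
qed

end


lemma cball_leb[measurable]: "cball x r \<in> sets (lebesgue :: 'a::euclidean_space measure)"
  by (intro sets_completionI_sets) (simp add: borel_closed)

lemma ball_leb[measurable]: "ball x r \<in> sets (lebesgue :: 'a::euclidean_space measure)"
  by (intro sets_completionI_sets) (simp add: borel_open)

lemma kernel_bound:
  fixes R \<mu> :: real
  assumes R: "0 < R" and \<mu>: "0 < \<mu>" "\<mu> < real DIM('a)"
  shows "\<exists>K. \<forall>x::'a::euclidean_space.
     (\<integral>\<^sup>+ y. indicator (ball x R) y * ennreal (norm (x - y) powr (-\<mu>)) \<partial>lebesgue) \<le> ennreal K"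
proof -
  define n where "n = DIM('a)"
  define V where "V = unit_ball_vol (real n)"
  define a where "a k = (R / 2^(k+1)) powr (-\<mu>)" for k :: nat
  define r where "r = 2 powr (\<mu> - real n)"
  define C where "C = V * R^n * (R/2) powr (-\<mu>)"
  have V: "V \<ge> 0" unfolding V_def by simp
  have "2 powr (\<mu> - real n) < 2 powr 0" using \<mu> n_def by (intro powr_less_mono) auto
  then have r: "0 < r" "r < 1" unfolding r_def by auto
  have b_eq: "a k * (V * (R/2^k)^n) = C * r^k" for k
  proof -
    have e2: "((2::real)^k) powr \<mu> = (2 powr \<mu>)^k"
    proof -
      have e1: "(2::real)^k = 2 powr real k" by (simp add: powr_realpow)
      show ?thesis unfolding e1 by (simp add: powr_powr powr_power mult.commute)
    qed
    have eq: "R / 2^(k+1) = (R/2) / 2^k" by simp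
    have "a k = ((R/2) / 2^k) powr (-\<mu>)" by (simp only: a_def eq)
    also have "\<dots> = (R/2) powr (-\<mu>) * (2 powr \<mu>)^k"
      unfolding powr_divide powr_minus e2 by (simp only: divide_inverse inverse_inverse_eq inverse_mult_distrib mult.assoc)
    finally have "a k = (R/2) powr (-\<mu>) * (2 powr \<mu>)^k" .
    moreover have "(R/2^k)^n = R^n / (2^n)^k" by (simp add: power_divide power_mult[symmetric] mult.commute)
    moreover have "(2 powr \<mu>)^k / (2^n)^k = r^k"
      unfolding r_def by (simp add: power_divide[symmetric] powr_diff powr_realpow)
    moreover have "((2::real)^n)^k = (2^k)^n" by (simp add: power_mult[symmetric] mult.commute)
    ultimately show ?thesis unfolding C_def by (simp add: field_simps)
  qed
  have summ: "summable (\<lambda>k. C * r^k)"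
    using r by (intro summable_mult summable_geometric) auto
  have C: "C \<ge> 0" unfolding C_def using V R by simp
  show ?thesis
  proof (intro exI allI)
    fix x :: 'a
    have pw: "indicator (ball x R) y * ennreal (norm (x - y) powr (-\<mu>))
        \<le> (\<Sum>k. ennreal (a k) * indicator (cball x (R/2^k)) y)" for y
    proof (cases "y \<in> ball x R \<and> y \<noteq> x")
      case False
      then show ?thesis by (auto simp: indicator_def)
    next
      case True
      define d where "d = norm (x - y)"
      have d: "0 < d" "d < R" using True by (auto simp: d_def dist_norm)
      define P where "P k \<longleftrightarrow> d \<le> R / 2^k" for k :: nat
      have P0: "P 0" using d by (simp add: P_def)
      obtain j where j: "(1/2::real)^j < d / R" using real_arch_pow_inv[of "d/R" "1/2"] d R by auto
      have "\<not> P j"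
      proof -
        have "R * (1/2)^j < R * (d / R)" using j R by (intro mult_strict_left_mono) auto
        then show ?thesis using R by (simp add: P_def power_one_over field_simps)
      qed
      define j0 where "j0 = (LEAST j. \<not> P j)"
      have nj0: "\<not> P j0" unfolding j0_def by (rule LeastI) (rule \<open>\<not> P j\<close>)
      have j0: "j0 \<noteq> 0" using nj0 P0 by (cases j0) auto
      define k where "k = j0 - 1"
      have Pk: "P k" unfolding k_def using j0 not_less_Least[of "j0 - 1" "\<lambda>j. \<not> P j"] unfolding j0_def[symmetric] by auto
      have nPk: "\<not> P (k+1)" using nj0 j0 unfolding k_def by simp
      have "d powr (-\<mu>) \<le> a k"
        unfolding a_def using nPk \<mu> R by (intro powr_mono2') (auto simp: P_def)
      then have "indicator (ball x R) y * ennreal (norm (x - y) powr (-\<mu>)) \<le> ennreal (a k) * indicator (cball x (R/2^k)) y"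
        using True Pk by (auto simp: d_def P_def dist_norm indicator_def intro!: ennreal_leI)
      also have "\<dots> \<le> (\<Sum>k. ennreal (a k) * indicator (cball x (R/2^k)) y)"
        by (metis ennreal_suminf_lessD not_le less_irrefl)
      finally show ?thesis .
    qed
    have "(\<integral>\<^sup>+ y. indicator (ball x R) y * ennreal (norm (x - y) powr (-\<mu>)) \<partial>lebesgue)
        \<le> (\<integral>\<^sup>+ y. (\<Sum>k. ennreal (a k) * indicator (cball x (R/2^k)) y) \<partial>lebesgue)"
      by (intro nn_integral_mono pw)
    also have "\<dots> = (\<Sum>k. \<integral>\<^sup>+ y. ennreal (a k) * indicator (cball x (R/2^k)) y \<partial>lebesgue)"
      by (rule nn_integral_suminf) measurable
    also have "\<dots> = (\<Sum>k. ennreal (C * r^k))"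
    proof (rule suminf_cong)
      fix k
      have "(\<integral>\<^sup>+ y. ennreal (a k) * indicator (cball x (R/2^k)) y \<partial>lebesgue) = ennreal (a k) * emeasure lebesgue (cball x (R/2^k))"
        by (rule nn_integral_cmult_indicator) measurable
      also have "emeasure lebesgue (cball x (R/2^k)) = ennreal (V * (R/2^k)^n)"
        using R by (simp add: emeasure_cball V_def n_def)
      also have "ennreal (a k) * ennreal (V * (R/2^k)^n) = ennreal (C * r^k)"
        using V R by (simp add: b_eq[symmetric] ennreal_mult a_def)
      finally show "(\<integral>\<^sup>+ y. ennreal (a k) * indicator (cball x (R/2^k)) y \<partial>lebesgue) = ennreal (C * r^k)" .
    qed
    also have "\<dots> = ennreal (\<Sum>k. C * r^k)"
      by (rule suminf_ennreal2) (use C r summ in auto)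
    finally show "(\<integral>\<^sup>+ y. indicator (ball x R) y * ennreal (norm (x - y) powr (-\<mu>)) \<partial>lebesgue) \<le> ennreal (\<Sum>k. C * r^k)" .
  qed
qed



definition Ik :: "('a::euclidean_space \<Rightarrow> real \<Rightarrow> real) \<Rightarrow> 'a set \<Rightarrow> real \<Rightarrow> ('a \<Rightarrow> real) \<Rightarrow> 'a \<Rightarrow> ennreal" where
  "Ik G \<Omega> \<mu> w x = (\<integral>\<^sup>+ y. ennreal (indicator \<Omega> y * (G y (w y) / norm (x - y) powr \<mu>)) \<partial>lebesgue)"
definition Bs :: "('a::euclidean_space \<Rightarrow> real \<Rightarrow> real) \<Rightarrow> 'a set \<Rightarrow> real \<Rightarrow> ('a \<Rightarrow> real) \<Rightarrow> ennreal" where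
  "Bs G \<Omega> \<mu> w = (\<integral>\<^sup>+ x. Ik G \<Omega> \<mu> w x * ennreal (indicator \<Omega> x * G x (w x)) \<partial>lebesgue)"
definition Bh :: "('a::euclidean_space \<Rightarrow> real \<Rightarrow> real) \<Rightarrow> 'a set \<Rightarrow> real \<Rightarrow> ('a \<Rightarrow> real) \<Rightarrow> ennreal" where
  "Bh G \<Omega> \<mu> w = (\<integral>\<^sup>+ x. ennreal (indicator \<Omega> x * (enn2real (Ik G \<Omega> \<mu> w x) * G x (w x))) \<partial>lebesgue)"
definition NL :: "('a::euclidean_space \<Rightarrow> real \<Rightarrow> real) \<Rightarrow> 'a set \<Rightarrow> real \<Rightarrow> ('a \<Rightarrow> real) \<Rightarrow> real" where
  "NL G \<Omega> \<mu> w = (LINT x:\<Omega>|lebesgue. (LINT y:\<Omega>|lebesgue. G y (w y) / norm (x - y) powr \<mu>) * G x (w x))"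

context ps_setting
begin

lemma GO_nonneg: "y \<in> \<Omega> \<Longrightarrow> G y t \<ge> 0"
  using G_nonneg closure_subset by blast

lemma inner_eq: "(\<lambda>y. indicator \<Omega> y * (G y (w y) / norm (x - y) powr \<mu>)) = (\<lambda>y. (indicator \<Omega> y * G y (w y)) / norm (x - y) powr \<mu>)"
  by auto

lemma inner_meas_real:
  assumes [measurable]: "w \<in> borel_measurable lebesgue"
  shows "(\<lambda>y. indicator \<Omega> y * (G y (w y) / norm (x - y) powr \<mu>)) \<in> borel_measurable lebesgue"
  unfolding inner_eq by measurable

lemma inner_meas[measurable]:
  assumes [measurable]: "w \<in> borel_measurable lebesgue"
  shows "(\<lambda>y. ennreal (indicator \<Omega> y * (G y (w y) / norm (x - y) powr \<mu>))) \<in> borel_measurable lebesgue"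
  using inner_meas_real[OF assms] by measurable

lemma joint_meas:
  assumes [measurable]: "w \<in> borel_measurable lebesgue"
  shows "(\<lambda>(x, y). ennreal (indicator \<Omega> y * (G y (w y) / norm (x - y) powr \<mu>))) \<in> borel_measurable (lebesgue \<Otimes>\<^sub>M lebesgue)"
proof -
  have [measurable]: "(\<lambda>z. indicator \<Omega> (snd z) * G (snd z) (w (snd z))) \<in> borel_measurable (lebesgue \<Otimes>\<^sub>M lebesgue)"
    by (rule measurable_compose[OF measurable_snd G_meas[OF assms]])
  have "(\<lambda>(x, y). ennreal (indicator \<Omega> y * (G y (w y) / norm (x - y) powr \<mu>)))
      = (\<lambda>z. ennreal ((indicator \<Omega> (snd z) * G (snd z) (w (snd z))) / norm (fst z - snd z) powr \<mu>))"
    by auto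
  also have "\<dots> \<in> borel_measurable (lebesgue \<Otimes>\<^sub>M lebesgue)" by measurable
  finally show ?thesis .
qed

lemma Ik_meas[measurable]:
  assumes "w \<in> borel_measurable lebesgue"
  shows "(\<lambda>x. Ik G \<Omega> \<mu> w x) \<in> borel_measurable lebesgue"
  unfolding Ik_def
  by (rule sigma_finite_measure.borel_measurable_nn_integral[OF sf_leb joint_meas[OF assms]])

lemma Bs_integrand_meas:
  assumes w: "w \<in> borel_measurable lebesgue"
  shows "(\<lambda>x. Ik G \<Omega> \<mu> w x * ennreal (indicator \<Omega> x * G x (w x))) \<in> borel_measurable lebesgue"
proof -
  have 1[measurable]: "(\<lambda>x. Ik G \<Omega> \<mu> w x) \<in> borel_measurable lebesgue" by (rule Ik_meas[OF w])
  have 2[measurable]: "(\<lambda>x. indicator \<Omega> x * G x (w x)) \<in> borel_measurable lebesgue" by (rule G_meas[OF w])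
  show ?thesis by measurable
qed

lemma NL_eq:
  assumes w[measurable]: "w \<in> borel_measurable lebesgue"
  shows "NL G \<Omega> \<mu> w = enn2real (Bh G \<Omega> \<mu> w)"
proof -
  have inner: "(LINT y:\<Omega>|lebesgue. G y (w y) / norm (x - y) powr \<mu>) = enn2real (Ik G \<Omega> \<mu> w x)" for x
    unfolding set_lebesgue_integral_def Ik_def
    using inner_meas_real[OF w, of x] GO_nonneg
    by (subst integral_eq_nn_integral) (auto simp: indicator_def)
  have "NL G \<Omega> \<mu> w = integral\<^sup>L lebesgue (\<lambda>x. enn2real (Ik G \<Omega> \<mu> w x) * (indicator \<Omega> x * G x (w x)))"
    by (simp only: NL_def inner) (simp add: set_lebesgue_integral_def mult_ac)
  also have "\<dots> = enn2real (\<integral>\<^sup>+ x. ennreal (enn2real (Ik G \<Omega> \<mu> w x) * (indicator \<Omega> x * G x (w x))) \<partial>lebesgue)"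
  proof (rule integral_eq_nn_integral)
    have 1[measurable]: "(\<lambda>x. Ik G \<Omega> \<mu> w x) \<in> borel_measurable lebesgue" by (rule Ik_meas[OF w])
    have 2[measurable]: "(\<lambda>x. indicator \<Omega> x * G x (w x)) \<in> borel_measurable lebesgue" by (rule G_meas[OF w])
    show "(\<lambda>x. enn2real (Ik G \<Omega> \<mu> w x) * (indicator \<Omega> x * G x (w x))) \<in> borel_measurable lebesgue"
      by measurable
    show "AE x in lebesgue. 0 \<le> enn2real (Ik G \<Omega> \<mu> w x) * (indicator \<Omega> x * G x (w x))"
      using GO_nonneg by (auto simp: indicator_def)
  qed
  also have "\<dots> = enn2real (Bh G \<Omega> \<mu> w)"
    unfolding Bh_def by (simp add: mult_ac)
  finally show ?thesis .
qed

lemma Bh_le: "Bh G \<Omega> \<mu> w \<le> Bs G \<Omega> \<mu> w"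
  unfolding Bh_def Bs_def
proof (rule nn_integral_mono)
  fix x
  show "ennreal (indicator \<Omega> x * (enn2real (Ik G \<Omega> \<mu> w x) * G x (w x))) \<le> Ik G \<Omega> \<mu> w x * ennreal (indicator \<Omega> x * G x (w x))"
  proof (cases "x \<in> \<Omega>")
    case True
    then have "ennreal (enn2real (Ik G \<Omega> \<mu> w x) * G x (w x)) = ennreal (enn2real (Ik G \<Omega> \<mu> w x)) * ennreal (G x (w x))"
      using GO_nonneg by (simp add: ennreal_mult)
    also have "\<dots> \<le> Ik G \<Omega> \<mu> w x * ennreal (G x (w x))"
      by (intro mult_right_mono) (auto simp: ennreal_enn2real_if)
    finally show ?thesis using True by simp
  qed simp
qed

lemma Bh_eq:
  assumes w[measurable]: "w \<in> borel_measurable lebesgue" and fin: "Bs G \<Omega> \<mu> w < \<infinity>"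
  shows "Bh G \<Omega> \<mu> w = Bs G \<Omega> \<mu> w"
proof -
  have "AE x in lebesgue. Ik G \<Omega> \<mu> w x * ennreal (indicator \<Omega> x * G x (w x)) \<noteq> \<infinity>"
    using fin Bs_integrand_meas[OF w] unfolding Bs_def by (intro nn_integral_PInf_AE) auto
  then show ?thesis
    unfolding Bh_def Bs_def
  proof (intro nn_integral_cong_AE, eventually_elim)
    case (elim x)
    show ?case
    proof (cases "x \<in> \<Omega> \<and> G x (w x) > 0")
      case True
      then have "Ik G \<Omega> \<mu> w x \<noteq> \<infinity>" using elim by (auto simp: ennreal_mult_eq_top_iff)
      then show ?thesis using True GO_nonneg
        by (simp add: ennreal_mult ennreal_enn2real_if)
    next
      case False
      then have h1: "indicator \<Omega> x * G x (w x) = 0" using GO_nonneg[of x "w x"] by (auto simp: indicator_def)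
      then have h2: "indicator \<Omega> x * (enn2real (Ik G \<Omega> \<mu> w x) * G x (w x)) = 0" by auto
      show ?thesis by (simp only: h1 h2 ennreal_0 mult_zero_right)
    qed
  qed
qed

lemma NL_Bs:
  assumes "w \<in> borel_measurable lebesgue" and "Bs G \<Omega> \<mu> w < \<infinity>"
  shows "NL G \<Omega> \<mu> w = enn2real (Bs G \<Omega> \<mu> w)"
  using NL_eq[OF assms(1)] Bh_eq[OF assms] by simp

lemma NL_nonneg: "w \<in> borel_measurable lebesgue \<Longrightarrow> NL G \<Omega> \<mu> w \<ge> 0"
  using NL_eq by simp

end


context ps_setting
begin

lemma Ik_scale:
  assumes w: "w \<in> borel_measurable lebesgue" and a: "0 < a" "a \<le> 1"
  shows "Ik G \<Omega> \<mu> (\<lambda>x. a * w x) x \<le> ennreal (a powr (l+1)) * Ik G \<Omega> \<mu> w x"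
proof -
  have "Ik G \<Omega> \<mu> (\<lambda>x. a * w x) x \<le> (\<integral>\<^sup>+ y. ennreal (a powr (l+1)) * ennreal (indicator \<Omega> y * (G y (w y) / norm (x - y) powr \<mu>)) \<partial>lebesgue)"
    unfolding Ik_def
  proof (rule nn_integral_mono)
    fix y
    show "ennreal (indicator \<Omega> y * (G y (a * w y) / norm (x - y) powr \<mu>)) \<le> ennreal (a powr (l+1)) * ennreal (indicator \<Omega> y * (G y (w y) / norm (x - y) powr \<mu>))"
    proof (cases "y \<in> \<Omega>")
      case True
      have "G y (a * w y) / norm (x - y) powr \<mu> \<le> (a powr (l+1) * G y (w y)) / norm (x - y) powr \<mu>"
        using G_scale[OF True a] by (intro divide_right_mono) auto
      then have "ennreal (G y (a * w y) / norm (x - y) powr \<mu>) \<le> ennreal (a powr (l+1) * (G y (w y) / norm (x - y) powr \<mu>))"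
        by (intro ennreal_leI) simp
      also have "\<dots> = ennreal (a powr (l+1)) * ennreal (G y (w y) / norm (x - y) powr \<mu>)"
        using GO_nonneg[OF True] by (intro ennreal_mult) auto
      finally show ?thesis using True by simp
    qed simp
  qed
  also have "\<dots> = ennreal (a powr (l+1)) * Ik G \<Omega> \<mu> w x"
    unfolding Ik_def by (rule nn_integral_cmult) (rule inner_meas[OF w])
  finally show ?thesis .
qed

lemma Bs_scale:
  assumes w: "w \<in> borel_measurable lebesgue" and a: "0 < a" "a \<le> 1"
  shows "Bs G \<Omega> \<mu> (\<lambda>x. a * w x) \<le> ennreal (a powr (2*l+2)) * Bs G \<Omega> \<mu> w"
proof -
  have "Bs G \<Omega> \<mu> (\<lambda>x. a * w x) \<le> (\<integral>\<^sup>+ x. ennreal (a powr (2*l+2)) * (Ik G \<Omega> \<mu> w x * ennreal (indicator \<Omega> x * G x (w x))) \<partial>lebesgue)"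
    unfolding Bs_def
  proof (rule nn_integral_mono)
    fix x
    have c: "a powr (2*l+2) = a powr (l+1) * a powr (l+1)"
      by (simp add: powr_add[symmetric])
    have g: "ennreal (indicator \<Omega> x * G x (a * w x)) \<le> ennreal (a powr (l+1)) * ennreal (indicator \<Omega> x * G x (w x))"
    proof (cases "x \<in> \<Omega>")
      case True
      have "ennreal (G x (a * w x)) \<le> ennreal (a powr (l+1) * G x (w x))"
        using G_scale[OF True a] by (intro ennreal_leI) auto
      also have "\<dots> = ennreal (a powr (l+1)) * ennreal (G x (w x))"
        using GO_nonneg[OF True] by (intro ennreal_mult) auto
      finally show ?thesis using True by simp
    qed simp
    have "Ik G \<Omega> \<mu> (\<lambda>x. a * w x) x * ennreal (indicator \<Omega> x * G x (a * w x))
        \<le> (ennreal (a powr (l+1)) * Ik G \<Omega> \<mu> w x) * (ennreal (a powr (l+1)) * ennreal (indicator \<Omega> x * G x (w x)))"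
      by (intro mult_mono Ik_scale[OF w a] g) auto
    also have "\<dots> = ennreal (a powr (2*l+2)) * (Ik G \<Omega> \<mu> w x * ennreal (indicator \<Omega> x * G x (w x)))"
      unfolding c by (simp add: ennreal_mult mult_ac)
    finally show "Ik G \<Omega> \<mu> (\<lambda>x. a * w x) x * ennreal (indicator \<Omega> x * G x (a * w x))
        \<le> ennreal (a powr (2*l+2)) * (Ik G \<Omega> \<mu> w x * ennreal (indicator \<Omega> x * G x (w x)))" .
  qed
  also have "\<dots> = ennreal (a powr (2*l+2)) * Bs G \<Omega> \<mu> w"
    unfolding Bs_def by (rule nn_integral_cmult) (rule Bs_integrand_meas[OF w])
  finally show ?thesis .
qed

lemma Ik_mono:
  assumes "\<And>y. y \<in> \<Omega> \<Longrightarrow> v y \<le> w y"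
  shows "Ik G \<Omega> \<mu> v x \<le> Ik G \<Omega> \<mu> w x"
  unfolding Ik_def
proof (rule nn_integral_mono)
  fix y
  show "ennreal (indicator \<Omega> y * (G y (v y) / norm (x - y) powr \<mu>)) \<le> ennreal (indicator \<Omega> y * (G y (w y) / norm (x - y) powr \<mu>))"
  proof (cases "y \<in> \<Omega>")
    case True
    then have "G y (v y) \<le> G y (w y)" using G_mono assms closure_subset by blast
    then show ?thesis using True by (auto intro!: ennreal_leI divide_right_mono)
  qed simp
qed

lemma Bs_mono:
  assumes "\<And>y. y \<in> \<Omega> \<Longrightarrow> v y \<le> w y"
  shows "Bs G \<Omega> \<mu> v \<le> Bs G \<Omega> \<mu> w"
  unfolding Bs_def
proof (rule nn_integral_mono)
  fix x
  have "ennreal (indicator \<Omega> x * G x (v x)) \<le> ennreal (indicator \<Omega> x * G x (w x))"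
  proof (cases "x \<in> \<Omega>")
    case True
    then have "G x (v x) \<le> G x (w x)" using G_mono assms closure_subset by blast
    then show ?thesis using True by (auto intro!: ennreal_leI)
  qed simp
  then show "Ik G \<Omega> \<mu> v x * ennreal (indicator \<Omega> x * G x (v x)) \<le> Ik G \<Omega> \<mu> w x * ennreal (indicator \<Omega> x * G x (w x))"
    by (intro mult_mono Ik_mono assms) auto
qed

lemma Ik_SUP:
  assumes w[measurable]: "w \<in> borel_measurable lebesgue"
  shows "Ik G \<Omega> \<mu> w x = (SUP m. Ik G \<Omega> \<mu> (\<lambda>y. min (w y) (real m)) x)"
proof -
  define f where "f m y = ennreal (indicator \<Omega> y * (G y (min (w y) (real m)) / norm (x - y) powr \<mu>))" for m y
  have wm: "(\<lambda>y. min (w y) (real m)) \<in> borel_measurable lebesgue" for m by measurable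
  have inc: "incseq f"
  proof (intro incseq_SucI le_funI)
    fix m y
    show "f m y \<le> f (Suc m) y"
    proof (cases "y \<in> \<Omega>")
      case True
      then have "G y (min (w y) (real m)) \<le> G y (min (w y) (real (Suc m)))"
        using closure_subset by (intro G_mono) auto
      then show ?thesis using True unfolding f_def by (auto intro!: ennreal_leI divide_right_mono)
    qed (simp add: f_def)
  qed
  have sup: "(SUP m. f m y) = ennreal (indicator \<Omega> y * (G y (w y) / norm (x - y) powr \<mu>))" for y
  proof (rule antisym)
    show "(SUP m. f m y) \<le> ennreal (indicator \<Omega> y * (G y (w y) / norm (x - y) powr \<mu>))"
    proof (rule SUP_least)
      fix m
      show "f m y \<le> ennreal (indicator \<Omega> y * (G y (w y) / norm (x - y) powr \<mu>))"
      proof (cases "y \<in> \<Omega>")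
        case True
        then have "G y (min (w y) (real m)) \<le> G y (w y)"
          using closure_subset by (intro G_mono) auto
        then show ?thesis using True unfolding f_def by (auto intro!: ennreal_leI divide_right_mono)
      qed (simp add: f_def)
    qed
    have "min (w y) (real (nat \<lceil>w y\<rceil>)) = w y" by linarith
    then have "f (nat \<lceil>w y\<rceil>) y = ennreal (indicator \<Omega> y * (G y (w y) / norm (x - y) powr \<mu>))"
      unfolding f_def by simp
    then show "ennreal (indicator \<Omega> y * (G y (w y) / norm (x - y) powr \<mu>)) \<le> (SUP m. f m y)"
      by (metis UNIV_I SUP_upper)
  qed
  have "Ik G \<Omega> \<mu> w x = (\<integral>\<^sup>+ y. (SUP m. f m y) \<partial>lebesgue)"
    unfolding Ik_def sup ..
  also have "\<dots> = (SUP m. integral\<^sup>N lebesgue (f m))"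
    by (rule nn_integral_monotone_convergence_SUP[OF inc]) (unfold f_def, rule inner_meas[OF wm])
  also have "\<dots> = (SUP m. Ik G \<Omega> \<mu> (\<lambda>y. min (w y) (real m)) x)"
    unfolding Ik_def f_def ..
  finally show ?thesis .
qed

lemma Bs_trunc:
  assumes w[measurable]: "w \<in> borel_measurable lebesgue"
    and K: "\<And>m. m \<ge> m0 \<Longrightarrow> Bs G \<Omega> \<mu> (\<lambda>y. min (w y) (real m)) \<le> K"
  shows "Bs G \<Omega> \<mu> w \<le> K"
proof -
  define wm where "wm m y = min (w y) (real m)" for m y
  have wm_meas: "wm m \<in> borel_measurable lebesgue" for m unfolding wm_def by measurable
  define h where "h m x = Ik G \<Omega> \<mu> (wm m) x * ennreal (indicator \<Omega> x * G x (wm m x))" for m x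
  have inc: "incseq h"
    unfolding h_def
  proof (intro incseq_SucI le_funI)
    fix m x
    have le: "wm m y \<le> wm (Suc m) y" for y unfolding wm_def by auto
    have "ennreal (indicator \<Omega> x * G x (wm m x)) \<le> ennreal (indicator \<Omega> x * G x (wm (Suc m) x))"
    proof (cases "x \<in> \<Omega>")
      case True
      then show ?thesis using closure_subset le by (auto intro!: ennreal_leI G_mono)
    qed simp
    then show "Ik G \<Omega> \<mu> (wm m) x * ennreal (indicator \<Omega> x * G x (wm m x)) \<le> Ik G \<Omega> \<mu> (wm (Suc m)) x * ennreal (indicator \<Omega> x * G x (wm (Suc m) x))"
      by (intro mult_mono Ik_mono le) auto
  qed
  have pw: "Ik G \<Omega> \<mu> w x * ennreal (indicator \<Omega> x * G x (w x)) \<le> (SUP m. h m x)" for x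
  proof -
    define c where "c = ennreal (indicator \<Omega> x * G x (w x))"
    define mx where "mx = nat \<lceil>w x\<rceil>"
    have "Ik G \<Omega> \<mu> w x * c = (SUP m. Ik G \<Omega> \<mu> (wm m) x) * c"
      using Ik_SUP[OF w, of x] unfolding wm_def by simp
    also have "\<dots> = (SUP m. Ik G \<Omega> \<mu> (wm m) x * c)" by (rule SUP_mult_right_ennreal)
    also have "\<dots> \<le> (SUP m. h m x)"
    proof (rule SUP_least)
      fix m
      have "wm (max m mx) x = w x" unfolding wm_def mx_def by (auto simp: max_def) linarith+
      then have "h (max m mx) x = Ik G \<Omega> \<mu> (wm (max m mx)) x * c" unfolding h_def c_def by simp
      moreover have "Ik G \<Omega> \<mu> (wm m) x \<le> Ik G \<Omega> \<mu> (wm (max m mx)) x"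
        by (rule Ik_mono) (auto simp: wm_def)
      ultimately have "Ik G \<Omega> \<mu> (wm m) x * c \<le> h (max m mx) x" by (simp add: mult_right_mono)
      also have "\<dots> \<le> (SUP m. h m x)" by (rule SUP_upper) simp
      finally show "Ik G \<Omega> \<mu> (wm m) x * c \<le> (SUP m. h m x)" .
    qed
    finally show ?thesis unfolding c_def .
  qed
  have "Bs G \<Omega> \<mu> w \<le> (\<integral>\<^sup>+ x. (SUP m. h m x) \<partial>lebesgue)"
    unfolding Bs_def by (rule nn_integral_mono) (rule pw)
  also have "\<dots> = (SUP m. integral\<^sup>N lebesgue (h m))"
    by (rule nn_integral_monotone_convergence_SUP[OF inc]) (unfold h_def, rule Bs_integrand_meas[OF wm_meas])
  also have "\<dots> \<le> K"
  proof (rule SUP_least)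
    fix m
    have "integral\<^sup>N lebesgue (h m) = Bs G \<Omega> \<mu> (wm m)" unfolding h_def Bs_def ..
    also have "\<dots> \<le> Bs G \<Omega> \<mu> (wm (max m m0))" by (rule Bs_mono) (auto simp: wm_def)
    also have "\<dots> \<le> K" using K[of "max m m0"] unfolding wm_def by simp
    finally show "integral\<^sup>N lebesgue (h m) \<le> K" .
  qed
  finally show ?thesis .
qed

lemma Bs_fin:
  assumes w[measurable]: "w \<in> borel_measurable lebesgue" and T: "\<And>y. w y \<le> T"
  shows "Bs G \<Omega> \<mu> w < \<infinity>"
proof -
  have "compact (closure \<Omega>)" using \<Omega>_bdd by (simp add: compact_closure)
  moreover have "continuous_on (closure \<Omega>) (\<lambda>y. G y T)"
    by (rule continuous_on_compose2[OF G_cont, where f="\<lambda>y. (y, T)", simplified]) (auto intro!: continuous_intros)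
  ultimately have "bounded ((\<lambda>y. G y T) ` closure \<Omega>)"
    by (intro compact_imp_bounded compact_continuous_image)
  then obtain Gm where Gm: "\<And>y. y \<in> closure \<Omega> \<Longrightarrow> \<bar>G y T\<bar> \<le> Gm"
    unfolding bounded_iff by auto
  have GmO: "\<And>y. y \<in> \<Omega> \<Longrightarrow> G y (w y) \<le> Gm"
    using Gm G_mono T closure_subset by (smt (verit) subsetD)
  obtain B where B: "\<And>y. y \<in> \<Omega> \<Longrightarrow> norm y \<le> B" using \<Omega>_bdd unfolding bounded_iff by auto
  define R where "R = 2 * \<bar>B\<bar> + 1"
  have R: "R > 0" unfolding R_def by simp
  obtain K where K: "\<And>x::'a. (\<integral>\<^sup>+ y. indicator (ball x R) y * ennreal (norm (x - y) powr (-\<mu>)) \<partial>lebesgue) \<le> ennreal K"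
    using kernel_bound[OF R \<mu>_pos \<mu>_lt] by blast
  have IkB: "Ik G \<Omega> \<mu> w x \<le> ennreal Gm * ennreal K" if x: "x \<in> \<Omega>" for x
  proof -
    have "Ik G \<Omega> \<mu> w x \<le> (\<integral>\<^sup>+ y. ennreal Gm * (indicator (ball x R) y * ennreal (norm (x - y) powr (-\<mu>))) \<partial>lebesgue)"
      unfolding Ik_def
    proof (rule nn_integral_mono)
      fix y
      show "ennreal (indicator \<Omega> y * (G y (w y) / norm (x - y) powr \<mu>)) \<le> ennreal Gm * (indicator (ball x R) y * ennreal (norm (x - y) powr (-\<mu>)))"
      proof (cases "y \<in> \<Omega>")
        case True
        have "norm (x - y) \<le> norm x + norm y" by (rule norm_triangle_ineq4)
        then have "dist x y < R" using B[OF x] B[OF True] unfolding R_def dist_norm by linarith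
        then have yb: "y \<in> ball x R" by simp
        have "G y (w y) / norm (x - y) powr \<mu> \<le> Gm / norm (x - y) powr \<mu>"
          using GmO[OF True] by (intro divide_right_mono) auto
        also have "\<dots> = Gm * norm (x - y) powr (-\<mu>)" by (simp add: powr_minus divide_inverse)
        finally have "ennreal (G y (w y) / norm (x - y) powr \<mu>) \<le> ennreal (Gm * norm (x - y) powr (-\<mu>))"
          by (rule ennreal_leI)
        also have "\<dots> = ennreal Gm * ennreal (norm (x - y) powr (-\<mu>))"
          using Gm[of y] True closure_subset[of \<Omega>] by (intro ennreal_mult) force+
        finally show ?thesis using True yb by simp
      qed simp
    qed
    also have "\<dots> = ennreal Gm * (\<integral>\<^sup>+ y. indicator (ball x R) y * ennreal (norm (x - y) powr (-\<mu>)) \<partial>lebesgue)"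
      by (rule nn_integral_cmult) measurable
    also have "\<dots> \<le> ennreal Gm * ennreal K" by (intro mult_left_mono K) auto
    finally show ?thesis .
  qed
  have "Bs G \<Omega> \<mu> w \<le> (\<integral>\<^sup>+ x. (ennreal Gm * ennreal K * ennreal Gm) * indicator \<Omega> x \<partial>lebesgue)"
    unfolding Bs_def
  proof (rule nn_integral_mono)
    fix x
    show "Ik G \<Omega> \<mu> w x * ennreal (indicator \<Omega> x * G x (w x)) \<le> (ennreal Gm * ennreal K * ennreal Gm) * indicator \<Omega> x"
    proof (cases "x \<in> \<Omega>")
      case True
      have "Ik G \<Omega> \<mu> w x * ennreal (G x (w x)) \<le> (ennreal Gm * ennreal K) * ennreal Gm"
        by (intro mult_mono IkB[OF True] ennreal_leI GmO[OF True]) auto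
      then show ?thesis using True by simp
    qed simp
  qed
  also have "\<dots> = (ennreal Gm * ennreal K * ennreal Gm) * emeasure lebesgue \<Omega>"
    using \<Omega>_open by (intro nn_integral_cmult_indicator) (simp add: borel_open)
  also have "\<dots> < \<infinity>"
  proof -
    have "emeasure lebesgue \<Omega> \<le> emeasure lebesgue (cball (0::'a) \<bar>B\<bar>)"
      using B \<Omega>_open by (intro emeasure_mono) (auto simp: borel_open, smt (verit) B)
    also have "\<dots> < \<infinity>" by (simp add: emeasure_cball)
    finally show ?thesis by (simp add: ennreal_mult_less_top)
  qed
  finally show ?thesis .
qed

end


lemma gag_joint_meas:
  fixes u :: "'a::euclidean_space \<Rightarrow> real"
  assumes [measurable]: "u \<in> borel_measurable lebesgue"
  shows "(\<lambda>(x, y). ennreal (\<bar>u x - u y\<bar> powr p / norm (x - y) powr c)) \<in> borel_measurable (lebesgue \<Otimes>\<^sub>M lebesgue)"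
proof -
  have "(\<lambda>z. ennreal (\<bar>u (fst z) - u (snd z)\<bar> powr p / norm (fst z - snd z) powr c)) \<in> borel_measurable (lebesgue \<Otimes>\<^sub>M lebesgue)"
    by measurable
  then show ?thesis by (simp add: split_beta)
qed

lemma gag_inner_meas:
  fixes u :: "'a::euclidean_space \<Rightarrow> real"
  assumes "u \<in> borel_measurable lebesgue"
  shows "(\<lambda>x. \<integral>\<^sup>+ y. ennreal (\<bar>u x - u y\<bar> powr p / norm (x - y) powr c) \<partial>lebesgue) \<in> borel_measurable lebesgue"
  by (rule sigma_finite_measure.borel_measurable_nn_integral[OF sf_leb gag_joint_meas[OF assms]])

lemma gag_mono:
  assumes p: "p \<ge> 0" and le: "\<And>x y. \<bar>v x - v y\<bar> \<le> \<bar>u x - u y\<bar>"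
  shows "gagliardo p s v \<le> gagliardo p s u"
  unfolding gagliardo_def
  by (intro nn_integral_mono ennreal_leI divide_right_mono powr_mono2 p le) auto

lemma gag_scale:
  fixes u :: "'a::euclidean_space \<Rightarrow> real"
  assumes u: "u \<in> borel_measurable lebesgue" and p: "p \<ge> 0"
  shows "gagliardo p s (\<lambda>x. c * u x) = ennreal (\<bar>c\<bar> powr p) * gagliardo p s u"
proof -
  have eq: "ennreal (\<bar>c * u x - c * u y\<bar> powr p / d) = ennreal (\<bar>c\<bar> powr p) * ennreal (\<bar>u x - u y\<bar> powr p / d)" if "d \<ge> 0" for x y d
  proof -
    have "\<bar>c * u x - c * u y\<bar> = \<bar>c\<bar> * \<bar>u x - u y\<bar>" by (simp add: abs_mult[symmetric] right_diff_distrib)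
    then have e1: "\<bar>c * u x - c * u y\<bar> powr p = \<bar>c\<bar> powr p * \<bar>u x - u y\<bar> powr p"
      by (simp add: powr_mult)
    have "ennreal (\<bar>c\<bar> powr p * (\<bar>u x - u y\<bar> powr p / d)) = ennreal (\<bar>c\<bar> powr p) * ennreal (\<bar>u x - u y\<bar> powr p / d)"
      using that by (intro ennreal_mult) auto
    then show ?thesis by (metis e1 times_divide_eq_right)
  qed
  have "gagliardo p s (\<lambda>x. c * u x) = (\<integral>\<^sup>+ x. ennreal (\<bar>c\<bar> powr p) * (\<integral>\<^sup>+ y. ennreal (\<bar>u x - u y\<bar> powr p / norm (x - y) powr (real DIM('a) + s * p)) \<partial>lebesgue) \<partial>lebesgue)"
    unfolding gagliardo_def eq[OF powr_ge_zero]
    using u by (subst nn_integral_cmult) (auto intro!: nn_integral_cong)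
  also have "\<dots> = ennreal (\<bar>c\<bar> powr p) * gagliardo p s u"
    unfolding gagliardo_def by (rule nn_integral_cmult) (rule gag_inner_meas[OF u])
  finally show ?thesis .
qed

lemma X0_meas: "u \<in> X0 s \<Omega> \<Longrightarrow> u \<in> borel_measurable lebesgue"
  by (simp add: X0_def frac_sobolev_def)

lemma X0_gag_fin: "u \<in> X0 s \<Omega> \<Longrightarrow> gagliardo (real DIM('a) / s) s (u :: 'a::euclidean_space \<Rightarrow> real) < \<infinity>"
  by (simp add: X0_def frac_sobolev_def)

lemma X0_dom:
  fixes u v :: "'a::euclidean_space \<Rightarrow> real"
  assumes u: "u \<in> X0 s \<Omega>" and s: "s > 0" and v: "v \<in> borel_measurable lebesgue"
    and le1: "\<And>x. \<bar>v x\<bar> \<le> \<bar>u x\<bar>" and le2: "\<And>x y. \<bar>v x - v y\<bar> \<le> \<bar>u x - u y\<bar>"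
  shows "v \<in> X0 s \<Omega>"
proof -
  have p: "real DIM('a) / s \<ge> 0" using s by simp
  have "(\<integral>\<^sup>+ x. ennreal (\<bar>v x\<bar> powr (real DIM('a) / s)) \<partial>lebesgue) \<le> (\<integral>\<^sup>+ x. ennreal (\<bar>u x\<bar> powr (real DIM('a) / s)) \<partial>lebesgue)"
    by (intro nn_integral_mono ennreal_leI powr_mono2 p le1) auto
  moreover have "gagliardo (real DIM('a) / s) s v \<le> gagliardo (real DIM('a) / s) s u"
    by (rule gag_mono[OF p le2])
  moreover have "v x = 0" if "x \<notin> \<Omega>" for x
    using le1[of x] u that by (auto simp: X0_def)
  ultimately show ?thesis using u v unfolding X0_def frac_sobolev_def by auto
qed

lemma X0_scale:
  fixes u :: "'a::euclidean_space \<Rightarrow> real"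
  assumes u: "u \<in> X0 s \<Omega>" and s: "s > 0"
  shows "(\<lambda>x. c * u x) \<in> X0 s \<Omega>"
proof -
  have p: "real DIM('a) / s \<ge> 0" using s by simp
  have um[measurable]: "u \<in> borel_measurable lebesgue" using u by (simp add: X0_def frac_sobolev_def)
  have "(\<integral>\<^sup>+ x. ennreal (\<bar>c * u x\<bar> powr (real DIM('a) / s)) \<partial>lebesgue)
      = (\<integral>\<^sup>+ x. ennreal (\<bar>c\<bar> powr (real DIM('a) / s)) * ennreal (\<bar>u x\<bar> powr (real DIM('a) / s)) \<partial>lebesgue)"
    by (intro nn_integral_cong) (simp add: abs_mult powr_mult ennreal_mult)
  also have "\<dots> = ennreal (\<bar>c\<bar> powr (real DIM('a) / s)) * (\<integral>\<^sup>+ x. ennreal (\<bar>u x\<bar> powr (real DIM('a) / s)) \<partial>lebesgue)"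
    by (rule nn_integral_cmult) measurable
  also have "\<dots> < \<infinity>" using u by (simp add: X0_def frac_sobolev_def ennreal_mult_less_top)
  finally have 1: "(\<integral>\<^sup>+ x. ennreal (\<bar>c * u x\<bar> powr (real DIM('a) / s)) \<partial>lebesgue) < \<infinity>" .
  have 2: "gagliardo (real DIM('a) / s) s (\<lambda>x. c * u x) < \<infinity>"
    using gag_scale[OF um p, of s c] u by (simp add: X0_def frac_sobolev_def ennreal_mult_less_top)
  show ?thesis using 1 2 u unfolding X0_def frac_sobolev_def by auto
qed

lemma X0_norm_nonneg: "X0_norm s u \<ge> 0"
  by (simp add: X0_norm_def)

lemma X0_norm_pow:
  fixes u :: "'a::euclidean_space \<Rightarrow> real"
  assumes s: "s > 0"
  shows "X0_norm s u powr (real DIM('a) / s) = enn2real (gagliardo (real DIM('a) / s) s u)"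
  unfolding X0_norm_def using s by (simp add: powr_powr)

lemma X0_norm_scale:
  fixes u :: "'a::euclidean_space \<Rightarrow> real"
  assumes u: "u \<in> X0 s \<Omega>" and s: "s > 0"
  shows "X0_norm s (\<lambda>x. c * u x) = \<bar>c\<bar> * X0_norm s u"
proof -
  have p: "real DIM('a) / s \<ge> 0" using s by simp
  have um: "u \<in> borel_measurable lebesgue" using u by (simp add: X0_def frac_sobolev_def)
  have "enn2real (gagliardo (real DIM('a) / s) s (\<lambda>x. c * u x)) = \<bar>c\<bar> powr (real DIM('a) / s) * enn2real (gagliardo (real DIM('a) / s) s u)"
    using gag_scale[OF um p, of s c] by (simp add: enn2real_mult)
  then show ?thesis
    unfolding X0_norm_def using s
    by (simp add: powr_mult powr_powr)
qed

lemma zero_X0: "s > 0 \<Longrightarrow> (\<lambda>x. 0) \<in> X0 s (\<Omega>::'a::euclidean_space set)"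
  by (simp add: X0_def frac_sobolev_def gagliardo_def)

lemma dual_bound:
  fixes L :: "('a::euclidean_space \<Rightarrow> real) \<Rightarrow> real"
  assumes d: "has_X0_derivative s \<Omega> J L u" and v: "v \<in> X0 s \<Omega>" and s: "s > 0"
  shows "\<bar>L v\<bar> \<le> X0_dual_norm s \<Omega> L * X0_norm s v"
proof -
  from d have lin: "\<And>v w a b. v \<in> X0 s \<Omega> \<Longrightarrow> w \<in> X0 s \<Omega> \<Longrightarrow> L (\<lambda>x. a * v x + b * w x) = a * L v + b * L w"
    and "\<exists>C. \<forall>v\<in>X0 s \<Omega>. \<bar>L v\<bar> \<le> C * X0_norm s v"
    unfolding has_X0_derivative_def by blast+
  then obtain C where C: "\<And>v. v \<in> X0 s \<Omega> \<Longrightarrow> \<bar>L v\<bar> \<le> C * X0_norm s v" by blast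
  define S where "S = {v \<in> X0 s \<Omega>. X0_norm s v \<le> 1}"
  have bdd: "bdd_above ((\<lambda>v. \<bar>L v\<bar>) ` S)"
  proof (rule bdd_aboveI2)
    fix w assume "w \<in> S"
    then have "\<bar>L w\<bar> \<le> C * X0_norm s w" "X0_norm s w \<le> 1" "X0_norm s w \<ge> 0"
      using C X0_norm_nonneg unfolding S_def by auto
    then have "\<bar>L w\<bar> \<le> \<bar>C\<bar> * X0_norm s w" by (smt (verit) mult_right_mono abs_ge_self)
    also have "\<dots> \<le> \<bar>C\<bar>" using \<open>X0_norm s w \<le> 1\<close> by (simp add: mult_left_le)
    finally show "\<bar>L w\<bar> \<le> \<bar>C\<bar>" .
  qed
  have z: "(\<lambda>x. 0) \<in> S" using zero_X0[OF s] unfolding S_def by (simp add: X0_norm_def gagliardo_def)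
  have dn: "X0_dual_norm s \<Omega> L = (SUP v\<in>S. \<bar>L v\<bar>)" unfolding X0_dual_norm_def S_def ..
  have dn0: "X0_dual_norm s \<Omega> L \<ge> 0"
    unfolding dn by (rule order_trans[OF _ cSUP_upper[OF z bdd]]) simp
  show ?thesis
  proof (cases "X0_norm s v = 0")
    case True
    then have "\<bar>L v\<bar> \<le> 0" using C[OF v] by simp
    then show ?thesis using True by simp
  next
    case False
    define \<nu> where "\<nu> = X0_norm s v"
    have \<nu>: "\<nu> > 0" using False X0_norm_nonneg[of s v] unfolding \<nu>_def by simp
    define v' where "v' = (\<lambda>x. (1/\<nu>) * v x)"
    have v': "v' \<in> X0 s \<Omega>" unfolding v'_def by (rule X0_scale[OF v s])
    have "X0_norm s v' = 1" unfolding v'_def X0_norm_scale[OF v s] using \<nu> \<nu>_def by simp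
    then have "v' \<in> S" using v' unfolding S_def by simp
    then have le: "\<bar>L v'\<bar> \<le> X0_dual_norm s \<Omega> L" unfolding dn by (rule cSUP_upper[OF _ bdd])
    have "L v' = (1/\<nu>) * L v"
      using lin[OF v v, of "1/\<nu>" 0] unfolding v'_def by simp
    then have "\<bar>L v\<bar> = \<nu> * \<bar>L v'\<bar>" using \<nu> by (simp add: abs_mult)
    also have "\<dots> \<le> \<nu> * X0_dual_norm s \<Omega> L" using le \<nu> by (intro mult_left_mono) auto
    finally show ?thesis unfolding \<nu>_def by (simp add: mult.commute)
  qed
qed



lemma trunc_lip: "(m0::real) \<le> m \<Longrightarrow> \<bar>(min a m - a) - (min b m - b)\<bar> \<le> \<bar>(min a m0 - a) - (min b m0 - b)\<bar>"
  by (simp add: min_def abs_if) linarith?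

lemma trunc_lip0: "(0::real) \<le> m \<Longrightarrow> \<bar>(min a m - a) - (min b m - b)\<bar> \<le> \<bar>a - b\<bar>"
  by (simp add: min_def abs_if) linarith?

lemma trunc_gag_small:
  fixes u :: "'a::euclidean_space \<Rightarrow> real" and e :: real
  assumes u: "u \<in> X0 s \<Omega>" and s: "s > 0" and e: "e > 0"
  shows "\<exists>m0. \<forall>m\<ge>m0. gagliardo (real DIM('a) / s) s (\<lambda>x. min (u x) (real m) - u x) < ennreal e"
proof -
  define p where "p = real DIM('a) / s"
  define q where "q = real DIM('a) + s * p"
  have p: "p \<ge> 0" unfolding p_def using s by simp
  have um[measurable]: "u \<in> borel_measurable lebesgue" using u by (rule X0_meas)
  define vm where "vm m x = min (u x) (real m) - u x" for m :: nat and x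
  have vm_meas: "vm m \<in> borel_measurable lebesgue" for m unfolding vm_def by measurable
  define F where "F m x y = ennreal (\<bar>vm m x - vm m y\<bar> powr p / norm (x - y) powr q)" for m x y
  define gm where "gm m x = (\<integral>\<^sup>+ y. F m x y \<partial>lebesgue)" for m x
  define Iu where "Iu x = (\<integral>\<^sup>+ y. ennreal (\<bar>u x - u y\<bar> powr p / norm (x - y) powr q) \<partial>lebesgue)" for x
  have gag_vm: "gagliardo p s (vm m) = (\<integral>\<^sup>+ x. gm m x \<partial>lebesgue)" for m
    unfolding gagliardo_def gm_def F_def q_def ..
  have gag_u: "gagliardo p s u = (\<integral>\<^sup>+ x. Iu x \<partial>lebesgue)"
    unfolding gagliardo_def Iu_def q_def ..
  have fin: "gagliardo p s u < \<infinity>" using X0_gag_fin[OF u] unfolding p_def .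
  have Fmono: "F m x y \<le> F m0 x y" if "m0 \<le> m" for m0 m x y
    unfolding F_def vm_def using that
    by (intro ennreal_leI divide_right_mono powr_mono2 p trunc_lip) auto
  have F0: "F 0 x y \<le> ennreal (\<bar>u x - u y\<bar> powr p / norm (x - y) powr q)" for x y
    unfolding F_def vm_def
    by (intro ennreal_leI divide_right_mono powr_mono2 p trunc_lip0) auto
  have Finf: "(INF m. F m x y) = 0" for x y
  proof -
    define m where "m = nat \<lceil>max (u x) (u y)\<rceil>"
    have "vm m x = 0" "vm m y = 0" unfolding vm_def m_def by (auto simp: min_def) linarith+
    then have "F m x y = 0" unfolding F_def using p by simp
    then show ?thesis by (metis INF_lower UNIV_I le_zero_eq)
  qed
  have meas_F: "(\<lambda>y. F m x y) \<in> borel_measurable lebesgue" for m x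
    unfolding F_def using vm_meas[of m] by measurable
  have AEfin: "AE x in lebesgue. Iu x \<noteq> \<infinity>"
    using fin gag_u gag_inner_meas[OF um, of p q] unfolding Iu_def
    by (intro nn_integral_PInf_AE) auto
  have AE0: "AE x in lebesgue. (INF m. gm m x) = 0"
    using AEfin
  proof eventually_elim
    case (elim x)
    have "(\<integral>\<^sup>+ y. (INF m. F m x y) \<partial>lebesgue) = (INF m. \<integral>\<^sup>+ y. F m x y \<partial>lebesgue)"
    proof (rule nn_integral_monotone_convergence_INF_decseq[where i=0])
      show "decseq (\<lambda>m y. F m x y)" by (intro decseq_SucI le_funI Fmono) auto
      show "(\<lambda>y. F m x y) \<in> borel_measurable lebesgue" for m by (rule meas_F)
      have "(\<integral>\<^sup>+ y. F 0 x y \<partial>lebesgue) \<le> Iu x" unfolding Iu_def by (intro nn_integral_mono F0)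
      then show "(\<integral>\<^sup>+ y. F 0 x y \<partial>lebesgue) < \<infinity>" using elim by (simp add: less_top order_le_less_trans)
    qed
    then show ?case unfolding gm_def Finf by simp
  qed
  have "(\<integral>\<^sup>+ x. (INF m. gm m x) \<partial>lebesgue) = (INF m. integral\<^sup>N lebesgue (gm m))"
  proof (rule nn_integral_monotone_convergence_INF_AE')
    show "AE x in lebesgue. gm (Suc i) x \<le> gm i x" for i
      unfolding gm_def by (intro AE_I2 nn_integral_mono Fmono) auto
    show "gm i \<in> borel_measurable lebesgue" for i
      using gag_inner_meas[OF vm_meas[of i], of p q] unfolding gm_def F_def by simp
    have "integral\<^sup>N lebesgue (gm 0) \<le> gagliardo p s u"
      unfolding gag_u gm_def Iu_def by (intro nn_integral_mono F0)
    then show "integral\<^sup>N lebesgue (gm 0) < \<infinity>" using fin by (simp add: order_le_less_trans)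
  qed
  moreover have "(\<integral>\<^sup>+ x. (INF m. gm m x) \<partial>lebesgue) = 0"
    using AE0 by (simp add: nn_integral_cong_AE)
  ultimately have "(INF m. gagliardo p s (vm m)) = 0" unfolding gag_vm by simp
  then have "(INF m. gagliardo p s (vm m)) < ennreal e" using e by simp
  then obtain m0 where m0: "gagliardo p s (vm m0) < ennreal e" by (auto simp: INF_less_iff)
  have "gagliardo p s (vm m) < ennreal e" if "m \<ge> m0" for m
  proof -
    have "gagliardo p s (vm m) \<le> gagliardo p s (vm m0)"
      using that unfolding vm_def by (intro gag_mono p trunc_lip) auto
    then show ?thesis using m0 by simp
  qed
  then show ?thesis unfolding vm_def p_def by auto
qed



context ps_setting
begin

lemma M_cont_on: "0 \<le> a \<Longrightarrow> continuous_on {a..b} M"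
  by (rule continuous_on_subset[OF M_cont]) auto

lemma Mhat_deriv:
  assumes N: "N > 0"
  shows "(Mhat M has_real_derivative M N) (at N)"
proof -
  have "((\<lambda>x. integral {0..x} M) has_real_derivative M N) (at N within {0..N+1})"
    using N by (intro integral_has_real_derivative M_cont_on) auto
  moreover have "at N within {0..N+1} = at N"
    using N by (intro at_within_interior) auto
  ultimately show ?thesis unfolding Mhat_def[abs_def] by simp
qed

lemma Mhat_mono:
  assumes "0 \<le> a" "a \<le> b"
  shows "Mhat M a \<le> Mhat M b"
proof -
  have "integral {0..a} M + integral {a..b} M = integral {0..b} M"
    using Henstock_Kurzweil_Integration.integral_combine[where a=0 and c=a and b=b and f=M] assms
      integrable_continuous_real[OF M_cont_on[of 0 b]] by simp
  moreover have "integral {a..b} M \<ge> 0"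
    using M_nonneg assms by (intro integral_nonneg integrable_continuous_real M_cont_on) auto
  ultimately show ?thesis unfolding Mhat_def by simp
qed

lemma Mhat_nonneg: "0 \<le> t \<Longrightarrow> Mhat M t \<ge> 0"
  using Mhat_mono[of 0 t] by (simp add: Mhat_def)

lemma Mhat_lower:
  assumes N: "N > 0"
  shows "M N * N / \<gamma> \<le> Mhat M N"
proof -
  define c where "c = M N / N powr (\<gamma> - 1)"
  have int: "((\<lambda>t. t powr (\<gamma> - 1)) has_integral (N powr \<gamma> / \<gamma> - 0 powr \<gamma> / \<gamma>)) {0..N}"
  proof (rule fundamental_theorem_of_calculus_interior)
    show "0 \<le> N" using N by simp
    show "continuous_on {0..N} (\<lambda>t. t powr \<gamma> / \<gamma>)"
      using \<gamma>_gt by (intro continuous_intros continuous_on_powr') auto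
    fix t assume t: "t \<in> {0<..<N}"
    have "((\<lambda>t. t powr \<gamma>) has_real_derivative \<gamma> * t powr (\<gamma> - 1)) (at t)"
      using t by (intro has_real_derivative_powr) auto
    then have "((\<lambda>t. t powr \<gamma> / \<gamma>) has_real_derivative (\<gamma> * t powr (\<gamma> - 1)) / \<gamma>) (at t)"
      by (rule DERIV_cdivide)
    then have "((\<lambda>t. t powr \<gamma> / \<gamma>) has_real_derivative t powr (\<gamma> - 1)) (at t)"
      using \<gamma>_gt by simp
    then show "((\<lambda>t. t powr \<gamma> / \<gamma>) has_vector_derivative t powr (\<gamma> - 1)) (at t)"
      by (simp add: has_real_derivative_iff_has_vector_derivative)
  qed
  then have int': "((\<lambda>t. c * t powr (\<gamma> - 1)) has_integral c * (N powr \<gamma> / \<gamma>)) {0..N}"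
    using \<gamma>_gt by (intro has_integral_mult_right) simp
  have "c * (N powr \<gamma> / \<gamma>) \<le> integral {0..N} M"
  proof (rule has_integral_le[OF int'])
    show "(M has_integral integral {0..N} M) {0..N}"
      by (intro integrable_integral integrable_continuous_real M_cont_on) simp
    fix t assume t: "t \<in> {0..N}"
    show "c * t powr (\<gamma> - 1) \<le> M t"
    proof (cases "t = 0")
      case True then show ?thesis using \<gamma>_gt M_nonneg by simp
    next
      case False
      then have t0: "t > 0" using t by simp
      have "M N / N powr (\<gamma> - 1) \<le> M t / t powr (\<gamma> - 1)" using M2 t t0 by auto
      then show ?thesis unfolding c_def using t0 by (simp add: field_simps)
    qed
  qed
  moreover have "c * (N powr \<gamma> / \<gamma>) = M N * N / \<gamma>"
  proof -
    have eq: "N powr \<gamma> / N powr (\<gamma> - 1) = N" using N by (simp add: powr_diff[symmetric])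
    have pos: "N powr (\<gamma> - 1) > 0" using N by simp
    have "c * (N powr \<gamma> / \<gamma>) = M N * (N powr \<gamma> / N powr (\<gamma> - 1)) / \<gamma>"
      unfolding c_def using pos by (simp add: field_simps)
    then show ?thesis using eq by simp
  qed
  ultimately show ?thesis unfolding Mhat_def by (metis (no_types, lifting))
qed

end


context ps_setting
begin

lemma J_eq:
  "J_fun s \<mu> M G \<Omega> u = s / real DIM('a) * Mhat M (enn2real (gagliardo (real DIM('a) / s) s u)) - 1/2 * NL G \<Omega> \<mu> u"
  unfolding J_fun_def NL_def X0_norm_pow[OF s_pos] ..

lemma Bs_finite:
  assumes u: "u \<in> X0 s \<Omega>" and d: "has_X0_derivative s \<Omega> (J_fun s \<mu> M G \<Omega>) L u"
  shows "Bs G \<Omega> \<mu> u < \<infinity>"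
proof -
  define n where "n = real DIM('a)"
  define p where "p = n / s"
  have n: "n > 0" unfolding n_def by simp
  have p: "p > 0" unfolding p_def using n s_pos by simp
  define J where "J = J_fun s \<mu> M G \<Omega>"
  have um[measurable]: "u \<in> borel_measurable lebesgue" using u by (rule X0_meas)
  from d obtain C where C: "\<And>v. v \<in> X0 s \<Omega> \<Longrightarrow> \<bar>L v\<bar> \<le> C * X0_norm s v"
    unfolding has_X0_derivative_def by blast
  from d obtain \<delta> where \<delta>: "\<delta> > 0" and
    dl: "\<And>v. v \<in> X0 s \<Omega> \<Longrightarrow> X0_norm s v < \<delta> \<Longrightarrow> \<bar>J (\<lambda>x. u x + v x) - J u - L v\<bar> \<le> 1 * X0_norm s v"
    unfolding has_X0_derivative_def J_def by (meson zero_less_one)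
  define \<delta>' where "\<delta>' = min \<delta> 1"
  have \<delta>': "\<delta>' > 0" "\<delta>' \<le> \<delta>" "\<delta>' \<le> 1" unfolding \<delta>'_def using \<delta> by auto
  obtain m0 where m0: "\<And>m. m \<ge> m0 \<Longrightarrow> gagliardo p s (\<lambda>x. min (u x) (real m) - u x) < ennreal (\<delta>' powr p)"
    using trunc_gag_small[OF u s_pos, of "\<delta>' powr p"] \<delta>' unfolding p_def n_def by auto
  define N where "N = enn2real (gagliardo p s u)"
  define K0 where "K0 = 2 * (s / n * Mhat M N - J u + 1 + \<bar>C\<bar>)"
  have gfin: "gagliardo p s u < \<infinity>" using X0_gag_fin[OF u] unfolding p_def n_def .
  have "Bs G \<Omega> \<mu> (\<lambda>y. min (u y) (real m)) \<le> ennreal K0" if m: "m \<ge> m0" for m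
  proof -
    define v where "v = (\<lambda>x. min (u x) (real m) - u x)"
    define w where "w = (\<lambda>x. min (u x) (real m))"
    have vm[measurable]: "v \<in> borel_measurable lebesgue" unfolding v_def by measurable
    have wm[measurable]: "w \<in> borel_measurable lebesgue" unfolding w_def by measurable
    have vX: "v \<in> X0 s \<Omega>"
      by (rule X0_dom[OF u s_pos vm]) (auto simp: v_def min_def abs_if intro: trunc_lip0[unfolded min_def])
    have gv: "gagliardo p s v < ennreal (\<delta>' powr p)" using m0[OF m] unfolding v_def .
    have gvfin: "gagliardo p s v < \<infinity>" using X0_gag_fin[OF vX] unfolding p_def n_def .
    have "enn2real (gagliardo p s v) < \<delta>' powr p"
      using gv gvfin by simp
    then have "X0_norm s v < (\<delta>' powr p) powr (s / n)"
      unfolding X0_norm_def p_def n_def using s_pos n n_def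
      by (intro powr_less_mono2) auto
    also have "(\<delta>' powr p) powr (s / n) = \<delta>'" using \<delta>' s_pos n by (simp add: powr_powr p_def)
    finally have nv: "X0_norm s v < \<delta>'" .
    have eqw: "(\<lambda>x. u x + v x) = w" unfolding v_def w_def by auto
    have "\<bar>J (\<lambda>x. u x + v x) - J u - L v\<bar> \<le> 1 * X0_norm s v" by (rule dl[OF vX]) (use nv \<delta>' in linarith)
    then have "\<bar>J w - J u - L v\<bar> \<le> X0_norm s v" unfolding eqw by simp
    moreover have "\<bar>L v\<bar> \<le> \<bar>C\<bar>"
    proof -
      have "\<bar>L v\<bar> \<le> C * X0_norm s v" by (rule C[OF vX])
      also have "\<dots> \<le> \<bar>C\<bar> * X0_norm s v" using X0_norm_nonneg by (intro mult_right_mono) auto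
      also have "\<dots> \<le> \<bar>C\<bar>" using nv \<delta>' X0_norm_nonneg[of s v] by (simp add: mult_left_le)
      finally show ?thesis .
    qed
    ultimately have Jw: "J w \<ge> J u - 1 - \<bar>C\<bar>" using nv \<delta>' by linarith
    have Nw: "enn2real (gagliardo p s w) \<le> N"
    proof -
      have "gagliardo p s w \<le> gagliardo p s u"
        unfolding w_def by (rule gag_mono) (use p in \<open>auto simp: min_def abs_if\<close>)
      then show ?thesis unfolding N_def using gfin by (intro enn2real_mono) auto
    qed
    have "Mhat M (enn2real (gagliardo p s w)) \<le> Mhat M N"
      by (rule Mhat_mono[OF _ Nw]) simp
    then have "s / n * Mhat M (enn2real (gagliardo p s w)) \<le> s / n * Mhat M N"
      using s_pos n by (intro mult_left_mono) auto
    moreover have "J w = s / n * Mhat M (enn2real (gagliardo p s w)) - 1/2 * NL G \<Omega> \<mu> w"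
      unfolding J_def J_eq n_def p_def ..
    moreover have key: "\<And>A Aw Jw Ju NLw c. (Aw::real) \<le> A \<Longrightarrow> Jw = Aw - 1/2*NLw \<Longrightarrow> Ju - 1 - c \<le> Jw \<Longrightarrow> NLw \<le> 2*(A - Ju + 1 + c)"
      by argo
    ultimately have NLw: "NL G \<Omega> \<mu> w \<le> K0" using Jw unfolding K0_def by blast
    have Bw: "Bs G \<Omega> \<mu> w < \<infinity>" by (rule Bs_fin[OF wm, of "real m"]) (simp add: w_def)
    have "NL G \<Omega> \<mu> w = enn2real (Bs G \<Omega> \<mu> w)" by (rule NL_Bs[OF wm Bw])
    then have "Bs G \<Omega> \<mu> w = ennreal (NL G \<Omega> \<mu> w)" using Bw by (simp add: ennreal_enn2real_if)
    then show ?thesis using NLw unfolding w_def by (simp add: ennreal_leI)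
  qed
  then have "Bs G \<Omega> \<mu> u \<le> ennreal K0" by (rule Bs_trunc[OF um])
  then show ?thesis using le_less_trans by fastforce
qed

end


context ps_setting
begin

lemma NL_scale:
  assumes u: "u \<in> X0 s \<Omega>" and fin: "Bs G \<Omega> \<mu> u < \<infinity>" and a: "0 < a" "a \<le> 1"
  shows "NL G \<Omega> \<mu> (\<lambda>x. a * u x) \<le> a powr (2*l+2) * NL G \<Omega> \<mu> u"
proof -
  have um[measurable]: "u \<in> borel_measurable lebesgue" using u by (rule X0_meas)
  have aum: "(\<lambda>x. a * u x) \<in> borel_measurable lebesgue" by measurable
  have le: "Bh G \<Omega> \<mu> (\<lambda>x. a * u x) \<le> ennreal (a powr (2*l+2)) * Bs G \<Omega> \<mu> u"
    using Bh_le Bs_scale[OF um a] by (rule order_trans)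
  have fin2: "ennreal (a powr (2*l+2)) * Bs G \<Omega> \<mu> u < top"
    using fin by (simp add: ennreal_mult_less_top)
  have "NL G \<Omega> \<mu> (\<lambda>x. a * u x) = enn2real (Bh G \<Omega> \<mu> (\<lambda>x. a * u x))" by (rule NL_eq[OF aum])
  also have "\<dots> \<le> enn2real (ennreal (a powr (2*l+2)) * Bs G \<Omega> \<mu> u)"
    by (rule enn2real_mono[OF le fin2])
  also have "\<dots> = a powr (2*l+2) * enn2real (Bs G \<Omega> \<mu> u)" by (simp add: enn2real_mult)
  also have "\<dots> = a powr (2*l+2) * NL G \<Omega> \<mu> u" using NL_Bs[OF um fin] by simp
  finally show ?thesis .
qed

lemma deriv_ineq:
  assumes u: "u \<in> X0 s \<Omega>" and d: "has_X0_derivative s \<Omega> (J_fun s \<mu> M G \<Omega>) L u"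
    and Npos: "enn2real (gagliardo (real DIM('a) / s) s u) > 0"
  shows "L u \<le> M (enn2real (gagliardo (real DIM('a) / s) s u)) * enn2real (gagliardo (real DIM('a) / s) s u)
              - (l + 1) * NL G \<Omega> \<mu> u"
proof -
  define n where "n = real DIM('a)"
  define p where "p = n / s"
  have n: "n > 0" unfolding n_def by simp
  have p: "p > 0" unfolding p_def using n s_pos by simp
  define J where "J = J_fun s \<mu> M G \<Omega>"
  define N where "N = enn2real (gagliardo p s u)"
  have N: "N > 0" using Npos unfolding N_def p_def n_def .
  define \<beta> where "\<beta> = NL G \<Omega> \<mu> u"
  define \<nu> where "\<nu> = X0_norm s u"
  have "\<nu> powr p = N" unfolding \<nu>_def N_def p_def n_def by (rule X0_norm_pow[OF s_pos])
  then have \<nu>: "\<nu> > 0" using N X0_norm_nonneg[of s u] unfolding \<nu>_def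
    by (cases "X0_norm s u = 0") auto
  have fin: "Bs G \<Omega> \<mu> u < \<infinity>" using Bs_finite[OF u d] .
  from d have lin: "\<And>v w a b. v \<in> X0 s \<Omega> \<Longrightarrow> w \<in> X0 s \<Omega> \<Longrightarrow> L (\<lambda>x. a * v x + b * w x) = a * L v + b * L w"
    unfolding has_X0_derivative_def by blast
  define \<phi> where "\<phi> a = s / n * Mhat M (a powr p * N) - 1/2 * (a powr (2*l+2) * \<beta>)" for a
  define D where "D = M N * N - (l + 1) * \<beta>"
  have Jscale: "J (\<lambda>x. a * u x) \<ge> \<phi> a" if a: "0 < a" "a \<le> 1" for a
  proof -
    have um: "u \<in> borel_measurable lebesgue" using u by (rule X0_meas)
    have "enn2real (gagliardo p s (\<lambda>x. a * u x)) = a powr p * N"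
      unfolding N_def using gag_scale[OF um, of p s a] p a by (simp add: enn2real_mult)
    then have "J (\<lambda>x. a * u x) = s / n * Mhat M (a powr p * N) - 1/2 * NL G \<Omega> \<mu> (\<lambda>x. a * u x)"
      unfolding J_def J_eq p_def n_def by simp
    moreover have "NL G \<Omega> \<mu> (\<lambda>x. a * u x) \<le> a powr (2*l+2) * \<beta>"
      unfolding \<beta>_def by (rule NL_scale[OF u fin a])
    ultimately show ?thesis unfolding \<phi>_def by simp
  qed
  have J1: "J u = \<phi> 1"
    unfolding J_def J_eq \<phi>_def \<beta>_def N_def p_def n_def by simp
  have deriv: "(\<phi> has_real_derivative D) (at 1)"
  proof -
    have d1: "((\<lambda>a. a powr p * N) has_real_derivative (p * 1 powr (p - 1)) * N) (at 1)"
      by (intro DERIV_cmult_right has_real_derivative_powr) simp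
    have dM: "(Mhat M has_real_derivative M N) (at (1 powr p * N))"
      using Mhat_deriv[OF N] by simp
    have d2: "((\<lambda>a. Mhat M (a powr p * N)) has_real_derivative M N * ((p * 1 powr (p - 1)) * N)) (at 1)"
      by (rule DERIV_chain2[OF dM d1])
    have d3: "((\<lambda>a. a powr (2*l+2) * \<beta>) has_real_derivative ((2*l+2) * 1 powr (2*l+2 - 1)) * \<beta>) (at 1)"
      by (intro DERIV_cmult_right has_real_derivative_powr) simp
    have "(\<phi> has_real_derivative s / n * (M N * ((p * 1 powr (p - 1)) * N)) - 1/2 * (((2*l+2) * 1 powr (2*l+2 - 1)) * \<beta>)) (at 1)"
      unfolding \<phi>_def by (intro DERIV_diff DERIV_cmult d2 d3)
    moreover have "s / n * (M N * ((p * 1 powr (p - 1)) * N)) - 1/2 * (((2*l+2) * 1 powr (2*l+2 - 1)) * \<beta>) = D"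
      unfolding D_def p_def using s_pos n by (simp add: field_simps)
    ultimately show ?thesis by simp
  qed
  have bound: "L u \<le> D + \<epsilon> * \<nu>" if \<epsilon>: "\<epsilon> > 0" for \<epsilon>
  proof -
    from d \<epsilon> obtain \<delta> where \<delta>: "\<delta> > 0" and
      dl: "\<And>v. v \<in> X0 s \<Omega> \<Longrightarrow> X0_norm s v < \<delta> \<Longrightarrow> \<bar>J (\<lambda>x. u x + v x) - J u - L v\<bar> \<le> \<epsilon> * X0_norm s v"
      unfolding has_X0_derivative_def J_def by meson
    define t where "t j = inverse (real (Suc j))" for j
    define a where "a j = 1 - t j" for j
    have t0: "t \<longlonglongrightarrow> 0" unfolding t_def using LIMSEQ_inverse_real_of_nat by simp
    have tpos: "t j > 0" for j unfolding t_def by simp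
    have a1: "a \<longlonglongrightarrow> 1" unfolding a_def using tendsto_diff[OF tendsto_const t0, of 1] by simp
    have fla: "filterlim a (at 1) sequentially"
      unfolding filterlim_at using a1 tpos by (auto simp: a_def less_imp_neq[symmetric] intro!: always_eventually)
    have "((\<lambda>y. (\<phi> y - \<phi> 1) / (y - 1)) \<longlongrightarrow> D) (at 1)"
      using deriv by (simp add: has_field_derivative_iff)
    from filterlim_compose[OF this fla]
    have q: "(\<lambda>j. (\<phi> (a j) - \<phi> 1) / (a j - 1)) \<longlonglongrightarrow> D" .
    have lim: "(\<lambda>j. \<epsilon> * \<nu> + (\<phi> (a j) - \<phi> 1) / (a j - 1)) \<longlonglongrightarrow> \<epsilon> * \<nu> + D"
      by (intro tendsto_add tendsto_const q)
    have ev1: "eventually (\<lambda>j. t j * \<nu> < \<delta>) sequentially"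
    proof -
      have "(\<lambda>j. t j * \<nu>) \<longlonglongrightarrow> 0 * \<nu>" by (intro tendsto_mult t0 tendsto_const)
      then show ?thesis using \<delta> by (simp add: order_tendstoD(2))
    qed
    have ev2: "eventually (\<lambda>j. j \<ge> 1) sequentially" by (rule eventually_ge_at_top)
    have "eventually (\<lambda>j. L u \<le> \<epsilon> * \<nu> + (\<phi> (a j) - \<phi> 1) / (a j - 1)) sequentially"
      using ev1 ev2
    proof eventually_elim
      case (elim j)
      have tj: "0 < t j" "t j \<le> 1 / 2"
      proof -
        show "0 < t j" by (rule tpos)
        have "real (Suc j) \<ge> 2" using elim(2) by simp
        then show "t j \<le> 1/2" unfolding t_def by (simp add: field_simps)
      qed
      have aj: "0 < a j" "a j \<le> 1" using tj unfolding a_def by auto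
      define v where "v = (\<lambda>x. (a j - 1) * u x)"
      have vX: "v \<in> X0 s \<Omega>" unfolding v_def by (rule X0_scale[OF u s_pos])
      have nv: "X0_norm s v = t j * \<nu>" unfolding v_def X0_norm_scale[OF u s_pos] \<nu>_def a_def using tj by simp
      have "\<bar>J (\<lambda>x. u x + v x) - J u - L v\<bar> \<le> \<epsilon> * X0_norm s v" by (rule dl[OF vX]) (use nv elim in simp)
      moreover have "(\<lambda>x. u x + v x) = (\<lambda>x. a j * u x)" unfolding v_def by (auto simp: algebra_simps)
      moreover have "L v = (a j - 1) * L u" using lin[OF u u, of "a j - 1" 0] unfolding v_def by simp
      ultimately have "J (\<lambda>x. a j * u x) - J u - (a j - 1) * L u \<le> \<epsilon> * (t j * \<nu>)" using nv by simp
      then have "\<phi> (a j) - \<phi> 1 + t j * L u \<le> \<epsilon> * (t j * \<nu>)"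
        using Jscale[OF aj] J1 unfolding a_def by simp
      then have "(L u - \<epsilon> * \<nu>) * t j \<le> \<phi> 1 - \<phi> (a j)"
        by (simp add: algebra_simps)
      then have "L u - \<epsilon> * \<nu> \<le> (\<phi> 1 - \<phi> (a j)) / t j"
        using tj by (simp add: pos_le_divide_eq)
      then have "L u \<le> \<epsilon> * \<nu> + (\<phi> 1 - \<phi> (a j)) / t j" by simp
      also have "(\<phi> 1 - \<phi> (a j)) / t j = (\<phi> (a j) - \<phi> 1) / (a j - 1)"
        unfolding a_def using tj by (simp add: field_simps)
      finally show ?case .
    qed
    from tendsto_lowerbound[OF lim this] show ?thesis by simp
  qed
  have "L u \<le> D"
  proof (rule ccontr)
    assume "\<not> L u \<le> D"
    then have "(L u - D) / (2 * \<nu>) > 0" using \<nu> by simp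
    from bound[OF this] have "L u \<le> D + (L u - D) / 2" using \<nu> by simp
    then show False using \<open>\<not> L u \<le> D\<close> by argo
  qed
  then show ?thesis unfolding D_def N_def \<beta>_def p_def n_def .
qed

end


context ps_setting
begin

lemma PS_bounded:
  fixes u :: "nat \<Rightarrow> 'a \<Rightarrow> real" and L :: "nat \<Rightarrow> ('a \<Rightarrow> real) \<Rightarrow> real"
  assumes PS: "\<forall>k. u k \<in> X0 s \<Omega>"
      "(\<lambda>k. J_fun s \<mu> M G \<Omega> (u k)) \<longlonglongrightarrow> c"
      "\<forall>k. has_X0_derivative s \<Omega> (J_fun s \<mu> M G \<Omega>) (L k) (u k)"
      "(\<lambda>k. X0_dual_norm s \<Omega> (L k)) \<longlonglongrightarrow> 0"
  shows "\<exists>C. \<forall>k. X0_norm s (u k) \<le> C"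
proof -
  define n where "n = real DIM('a)"
  define p where "p = n / s"
  have n: "n > 0" unfolding n_def by simp
  have p2: "p \<ge> 2" unfolding p_def n_def using p_ge2 .
  define J where "J = J_fun s \<mu> M G \<Omega>"
  have "Bseq (\<lambda>k. J (u k))" unfolding J_def using PS(2) by (intro convergent_imp_Bseq convergentI)
  then obtain K1 where K1: "K1 > 0" "\<And>k. \<bar>J (u k)\<bar> \<le> K1" by (auto elim: BseqE)
  have "Bseq (\<lambda>k. X0_dual_norm s \<Omega> (L k))" using PS(4) by (intro convergent_imp_Bseq convergentI)
  then obtain K2 where K2: "K2 > 0" "\<And>k. \<bar>X0_dual_norm s \<Omega> (L k)\<bar> \<le> K2" by (auto elim: BseqE)
  obtain \<kappa> where \<kappa>: "\<kappa> > 0" "\<And>t. t \<ge> 1 \<Longrightarrow> M t \<ge> \<kappa>" using M3 by (meson zero_less_one)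
  define \<theta> where "\<theta> = 1 / (2 * (l + 1))"
  define a0 where "a0 = s / (n * \<gamma>) - \<theta>"
  have l1: "l + 1 > \<gamma> * n / (2 * s)" using l_big unfolding n_def by simp
  have lpos: "l + 1 > 0" using l1 \<gamma>_gt n s_pos by (smt (verit) divide_pos_pos mult_pos_pos)
  have \<theta>: "\<theta> > 0" "\<theta> * (l + 1) = 1/2" unfolding \<theta>_def using lpos by auto
  have a0: "a0 > 0"
  proof -
    have "\<gamma> * n < (l + 1) * (2 * s)" using l1 s_pos by (simp add: pos_divide_less_eq)
    then have "1 / (2 * (l + 1)) < s / (n * \<gamma>)"
      using lpos s_pos n \<gamma>_gt by (simp add: field_simps)
    then show ?thesis unfolding a0_def \<theta>_def by simp
  qed
  define Cb where "Cb = max 1 ((K1 + \<theta> * K2) / (a0 * \<kappa>))"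
  have "X0_norm s (u k) \<le> Cb" for k
  proof (cases "X0_norm s (u k) \<le> 1")
    case True then show ?thesis unfolding Cb_def by simp
  next
    case False
    define \<nu> where "\<nu> = X0_norm s (u k)"
    have \<nu>1: "\<nu> > 1" using False unfolding \<nu>_def by simp
    define N where "N = enn2real (gagliardo p s (u k))"
    have N\<nu>: "N = \<nu> powr p" unfolding N_def \<nu>_def p_def n_def using X0_norm_pow[OF s_pos, of "u k"] by simp
    have "\<nu> powr 2 \<le> \<nu> powr p" using \<nu>1 p2 by (intro powr_mono) auto
    then have N2: "\<nu> * \<nu> \<le> N" using N\<nu> \<nu>1 by (simp add: powr_realpow[symmetric] power2_eq_square)
    have N1: "N \<ge> 1" using N2 \<nu>1 by (smt (verit) mult_less_cancel_left1)
    have uk: "u k \<in> X0 s \<Omega>" using PS(1) by simp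
    have dk: "has_X0_derivative s \<Omega> J (L k) (u k)" using PS(3) unfolding J_def by simp
    define \<beta> where "\<beta> = NL G \<Omega> \<mu> (u k)"
    define X where "X = M N * N"
    have hL: "L k (u k) \<le> X - (l + 1) * \<beta>"
      using deriv_ineq[OF uk dk[unfolded J_def]] N1 unfolding X_def \<beta>_def N_def p_def n_def by simp
    have hJ: "J (u k) = s / n * Mhat M N - 1/2 * \<beta>"
      unfolding J_def J_eq N_def \<beta>_def p_def n_def ..
    have hM: "Mhat M N \<ge> X / \<gamma>" using Mhat_lower[of N] N1 unfolding X_def by simp
    have e1: "\<theta> * L k (u k) \<le> \<theta> * X - 1/2 * \<beta>"
    proof -
      have "\<theta> * L k (u k) \<le> \<theta> * (X - (l + 1) * \<beta>)" using hL \<theta> by (intro mult_left_mono) auto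
      also have "\<dots> = \<theta> * X - (\<theta> * (l + 1)) * \<beta>" by (simp add: algebra_simps)
      finally show ?thesis using \<theta> by simp
    qed
    have e2: "s / n * Mhat M N \<ge> s / (n * \<gamma>) * X"
    proof -
      have "s / n * (X / \<gamma>) \<le> s / n * Mhat M N" using hM s_pos n by (intro mult_left_mono) auto
      then show ?thesis by (simp add: field_simps)
    qed
    have e3: "J (u k) - \<theta> * L k (u k) \<ge> a0 * X"
      using e1 e2 hJ unfolding a0_def by (simp add: algebra_simps)
    have e4: "X \<ge> \<kappa> * N" unfolding X_def using \<kappa>(2)[OF N1] N1 by (intro mult_right_mono) auto
    have e5: "\<bar>L k (u k)\<bar> \<le> K2 * \<nu>"
    proof -
      have "\<bar>L k (u k)\<bar> \<le> X0_dual_norm s \<Omega> (L k) * \<nu>" unfolding \<nu>_def by (rule dual_bound[OF dk uk s_pos])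
      also have "\<dots> \<le> K2 * \<nu>" using K2(2)[of k] \<nu>1 by (intro mult_right_mono) auto
      finally show ?thesis .
    qed
    have e6: "J (u k) - \<theta> * L k (u k) \<le> K1 + \<theta> * K2 * \<nu>"
    proof -
      have "- (\<theta> * L k (u k)) = \<theta> * (- L k (u k))" by simp
      also have "\<dots> \<le> \<theta> * \<bar>L k (u k)\<bar>" using \<theta> by (intro mult_left_mono) auto
      also have "\<dots> \<le> \<theta> * (K2 * \<nu>)" using e5 \<theta> by (intro mult_left_mono) auto
      finally show ?thesis using K1(2)[of k] by (simp add: mult.assoc)
    qed
    have "a0 * \<kappa> * (\<nu> * \<nu>) \<le> a0 * \<kappa> * N" using N2 a0 \<kappa> by (intro mult_left_mono) auto
    also have "\<dots> \<le> a0 * X" using e4 a0 by (simp add: mult.assoc mult_left_mono)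
    also have "\<dots> \<le> K1 + \<theta> * K2 * \<nu>" using e3 e6 by linarith
    also have "\<dots> \<le> (K1 + \<theta> * K2) * \<nu>" using \<nu>1 K1 by (simp add: algebra_simps)
    finally have "(a0 * \<kappa> * \<nu>) * \<nu> \<le> (K1 + \<theta> * K2) * \<nu>" by (simp add: mult.assoc)
    then have "a0 * \<kappa> * \<nu> \<le> K1 + \<theta> * K2" using \<nu>1 by simp
    then have "\<nu> \<le> (K1 + \<theta> * K2) / (a0 * \<kappa>)" using a0 \<kappa> by (simp add: pos_le_divide_eq mult.commute)
    then show ?thesis unfolding Cb_def \<nu>_def by simp
  qed
  then show ?thesis by blast
qed

end


theorem lemma3p2:
  fixes \<Omega> :: "'a::euclidean_space set" and s \<mu> \<gamma> c :: real
    and M :: "real \<Rightarrow> real" and h g G :: "'a \<Rightarrow> real \<Rightarrow> real"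
    and u :: "nat \<Rightarrow> 'a \<Rightarrow> real" and L :: "nat \<Rightarrow> ('a \<Rightarrow> real) \<Rightarrow> real"
  assumes s: "0 < s" "s < 1" "real DIM('a) / s \<ge> 2"
    and \<Omega>: "bounded \<Omega>" "lipschitz_domain \<Omega>"
    and \<mu>: "0 < \<mu>" "\<mu> < real DIM('a)"
    and M_cont: "continuous_on {0..} M"
    and M_nonneg: "\<forall>t\<ge>0. M t \<ge> 0"
    and M1: "\<forall>t\<ge>0. \<forall>r\<ge>0. Mhat M (t + r) \<ge> Mhat M t + Mhat M r"
    and M2: "\<gamma> > 1" "\<forall>t1 t2. 0 < t1 \<longrightarrow> t1 \<le> t2 \<longrightarrow> M t2 / t2 powr (\<gamma> - 1) \<le> M t1 / t1 powr (\<gamma> - 1)"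
    and M3: "\<forall>b>0. \<exists>\<kappa>>0. \<forall>t\<ge>b. M t \<ge> \<kappa>"
    and g_def: "\<forall>x t. g x t = h x t * exp (\<bar>t\<bar> powr (real DIM('a) / (real DIM('a) - s)))"
    and G_def: "\<forall>x t. G x t = integral {0..t} (g x)"
    and g1: "\<exists>D. (\<forall>z\<in>closure \<Omega> \<times> UNIV.
                  ((\<lambda>z. h (fst z) (snd z)) has_derivative D z) (at z within closure \<Omega> \<times> UNIV)) \<and>
                (\<forall>v. continuous_on (closure \<Omega> \<times> UNIV) (\<lambda>z. D z v))"
      "\<forall>x\<in>closure \<Omega>. \<forall>t\<le>0. h x t = 0"
      "\<forall>x\<in>closure \<Omega>. \<forall>t>0. h x t > 0"
    and g2: "\<forall>\<epsilon>>0. ((\<lambda>t. SUP x\<in>\<Omega>. h x t * exp (- \<epsilon> * \<bar>t\<bar> powr (real DIM('a) / (real DIM('a) - s))))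
                 \<longlongrightarrow> 0) at_top"
      "\<forall>\<epsilon>>0. filterlim (\<lambda>t. INF x\<in>\<Omega>. h x t * exp (\<epsilon> * \<bar>t\<bar> powr (real DIM('a) / (real DIM('a) - s))))
                 at_top at_top"
    and g3: "\<exists>t0>0. \<exists>T0>0. \<exists>\<gamma>0>0. \<forall>x\<in>\<Omega>. \<forall>t\<ge>t0.
               0 < t powr \<gamma>0 * G x t \<and> t powr \<gamma>0 * G x t \<le> T0 * g x t"
    and g4: "\<exists>l. l > \<gamma> * real DIM('a) / (2 * s) - 1 \<and>
               (\<forall>x\<in>\<Omega>. strict_mono_on {0<..} (\<lambda>t. g x t / t powr l))"
    and PS: "\<forall>k. u k \<in> X0 s \<Omega>"
      "(\<lambda>k. J_fun s \<mu> M G \<Omega> (u k)) \<longlonglongrightarrow> c"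
      "\<forall>k. has_X0_derivative s \<Omega> (J_fun s \<mu> M G \<Omega>) (L k) (u k)"
      "(\<lambda>k. X0_dual_norm s \<Omega> (L k)) \<longlonglongrightarrow> 0"
  shows "\<exists>C. \<forall>k. X0_norm s (u k) \<le> C"
proof -
  from g4 obtain l where l: "l > \<gamma> * real DIM('a) / (2 * s) - 1"
    and mono: "\<forall>x\<in>\<Omega>. strict_mono_on {0<..} (\<lambda>t. g x t / t powr l)" by blast
  have \<Omega>o: "open \<Omega>" using \<Omega>(2) unfolding lipschitz_domain_def by blast
  from g1(1) obtain D where D: "\<forall>z\<in>closure \<Omega> \<times> UNIV. ((\<lambda>z. h (fst z) (snd z)) has_derivative D z) (at z within closure \<Omega> \<times> UNIV)"
    by blast
  have hc: "continuous_on (closure \<Omega> \<times> UNIV) (\<lambda>z. h (fst z) (snd z))"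
    unfolding continuous_on_eq_continuous_within using D has_derivative_continuous by blast
  define e where "e = real DIM('a) / (real DIM('a) - s)"
  have ns: "real DIM('a) - s > 0"
  proof -
    have "real DIM('a) \<ge> 1" by simp
    then show ?thesis using s by linarith
  qed
  have e: "e > 0" unfolding e_def using ns by simp
  have ec: "continuous_on (closure \<Omega> \<times> UNIV) (\<lambda>z. exp (\<bar>snd z\<bar> powr e))"
    using e by (intro continuous_intros continuous_on_powr') auto
  have gc: "continuous_on (closure \<Omega> \<times> UNIV) (\<lambda>z. g (fst z) (snd z))"
  proof -
    have "continuous_on (closure \<Omega> \<times> UNIV) (\<lambda>z. h (fst z) (snd z) * exp (\<bar>snd z\<bar> powr e))"
      by (rule continuous_on_mult[OF hc ec])
    then show ?thesis using g_def unfolding e_def by simp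
  qed
  have gn: "\<forall>x\<in>closure \<Omega>. \<forall>t. g x t \<ge> 0"
  proof (intro ballI allI)
    fix x t assume x: "x \<in> closure \<Omega>"
    have "h x t \<ge> 0" using g1(2,3) x by (cases "t \<le> 0") (auto, meson less_eq_real_def not_le)
    then show "g x t \<ge> 0" using g_def by simp
  qed
  have gz: "\<forall>x\<in>closure \<Omega>. \<forall>t\<le>0. g x t = 0" using g1(2) g_def by simp
  have gs: "\<forall>x\<in>\<Omega>. \<forall>\<sigma>>0. \<forall>a. 0 < a \<longrightarrow> a \<le> 1 \<longrightarrow> g x (a * \<sigma>) \<le> a powr l * g x \<sigma>"
  proof (intro ballI allI impI)
    fix x and \<sigma> a :: real assume x: "x \<in> \<Omega>" and \<sigma>: "\<sigma> > 0" and a: "0 < a" "a \<le> 1"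
    show "g x (a * \<sigma>) \<le> a powr l * g x \<sigma>"
    proof (cases "a = 1")
      case True then show ?thesis by simp
    next
      case False
      then have "a * \<sigma> < \<sigma>" using a \<sigma> by simp
      moreover have "a * \<sigma> \<in> {0<..}" "\<sigma> \<in> {0<..}" using a \<sigma> by auto
      ultimately have lt: "g x (a * \<sigma>) / (a * \<sigma>) powr l < g x \<sigma> / \<sigma> powr l"
        using mono x by (meson strict_mono_onD)
      have pw: "(a * \<sigma>) powr l = a powr l * \<sigma> powr l" using a \<sigma> by (simp add: powr_mult)
      have "g x (a * \<sigma>) < (g x \<sigma> / \<sigma> powr l) * (a * \<sigma>) powr l"
        using lt a \<sigma> by (simp add: divide_less_eq)
      also have "\<dots> = a powr l * g x \<sigma>" unfolding pw using \<sigma> by simp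
      finally show ?thesis by simp
    qed
  qed
  have loc: "ps_setting \<Omega> s \<mu> \<gamma> l M g G"
    unfolding ps_setting_def using s \<Omega>(1) \<Omega>o \<mu> M_cont M_nonneg M2 M3 gc gn gz gs G_def l by auto
  show ?thesis by (rule ps_setting.PS_bounded[OF loc PS(1) PS(2) PS(3) PS(4)])
qed


end
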